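(* Let $R$ be a P$v$MD. The following conditions are equivalent: (i) $R$ is a $tRTP$-domain; (ii) each branched $t$-prime $P$ contains a finitely generated ideal $J$ such that $J\subseteq P$ and $J\not\subseteq M$ for each $t$-maximal ideal $M$ not containing $P$; (iii) each branched $t$-prime is the radical of a $v$-finite divisorial ideal; (iv) each nonzero principal ideal has at most finitely many minimal primes; (v) each nonzero finitely generated ideal has at most finitely many minimal $t$-primes; (vi) each $v$-finite divisorial ideal has at most finitely many minimal primes.
   Context: $R$ is an integral domain with quotient field $K\neq R$. For nonzero $R$-submodules $A,B$ of $K$, $(A:B)=\{x\in K: xB\subseteq A\}$. For a nonzero fractional ideal $I$, $I_v=(R:(R:I))$, $I_t=\bigcup\{J_v: J\subseteq I\text{ nonzero finitely generated}\}$; $I$ is divisorial if $I=I_v$, a $t$-ideal if $I=I_t$; a $v$-finite divisorial ideal is one of the form $J_v$ with $J$ finitely generated. A $t$-prime is a prime $t$-ideal; a $t$-maximal ideal is an ideal maximal among proper $t$-ideals. $R$ is a P$v$MD if $R_M$ is a valuation domain for every $t$-maximal $M$. A prime $P$ is branched if there is a $P$-primary ideal different from $P$. $R$ is a $tRTP$-domain ($t$-radical trace property) if for each nonzero ideal $I$ of $R$, either $(I(R:I))_t=R$ or $(I(R:I))_t$ is a radical ideal. *)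

theory Defs
  imports Main
begin

text \<open>The quotient field K is modelled as a type 'k of class field; the domain R is a
subset of it.\<close>

definition is_subring :: "'k::field set \<Rightarrow> bool" where
  "is_subring R \<longleftrightarrow> 0 \<in> R \<and> 1 \<in> R \<and> (\<forall>a\<in>R. \<forall>b\<in>R. a + b \<in> R \<and> a * b \<in> R \<and> - a \<in> R)"

definition has_quotient_field :: "'k::field set \<Rightarrow> bool" where
  "has_quotient_field R \<longleftrightarrow> (\<forall>x. \<exists>a\<in>R. \<exists>b\<in>R. b \<noteq> 0 \<and> x = a / b)"

definition rsubmodule :: "'k::field set \<Rightarrow> 'k set \<Rightarrow> bool" where
  "rsubmodule R A \<longleftrightarrow> 0 \<in> A \<and> (\<forall>a\<in>A. \<forall>b\<in>A. a + b \<in> A) \<and> (\<forall>r\<in>R. \<forall>a\<in>A. r * a \<in> A)"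

definition rideal :: "'k::field set \<Rightarrow> 'k set \<Rightarrow> bool" where
  "rideal R I \<longleftrightarrow> rsubmodule R I \<and> I \<subseteq> R"

definition rspan :: "'k::field set \<Rightarrow> 'k set \<Rightarrow> 'k set" where
  "rspan R S = {x. \<exists>F r. finite F \<and> F \<subseteq> S \<and> (\<forall>s\<in>F. r s \<in> R) \<and> x = (\<Sum>s\<in>F. r s * s)}"

definition fin_gen :: "'k::field set \<Rightarrow> 'k set \<Rightarrow> bool" where
  "fin_gen R J \<longleftrightarrow> (\<exists>F. finite F \<and> J = rspan R F)"

definition colon :: "'k::field set \<Rightarrow> 'k set \<Rightarrow> 'k set" where
  "colon A B = {x. \<forall>b\<in>B. x * b \<in> A}"

definition vop :: "'k::field set \<Rightarrow> 'k set \<Rightarrow> 'k set" where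
  "vop R I = colon R (colon R I)"

definition top_t :: "'k::field set \<Rightarrow> 'k set \<Rightarrow> 'k set" where
  "top_t R I = \<Union>{vop R J | J. J \<subseteq> I \<and> J \<noteq> {0} \<and> fin_gen R J}"

definition iprod :: "'k::field set \<Rightarrow> 'k set \<Rightarrow> 'k set \<Rightarrow> 'k set" where
  "iprod R A B = rspan R {a * b | a b. a \<in> A \<and> b \<in> B}"

definition rad :: "'k::field set \<Rightarrow> 'k set \<Rightarrow> 'k set" where
  "rad R I = {x \<in> R. \<exists>n. x ^ n \<in> I}"

definition t_ideal :: "'k::field set \<Rightarrow> 'k set \<Rightarrow> bool" where
  "t_ideal R I \<longleftrightarrow> rideal R I \<and> I \<noteq> {0} \<and> top_t R I = I"

definition prime_ideal :: "'k::field set \<Rightarrow> 'k set \<Rightarrow> bool" where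
  "prime_ideal R P \<longleftrightarrow> rideal R P \<and> P \<noteq> R \<and> (\<forall>a\<in>R. \<forall>b\<in>R. a * b \<in> P \<longrightarrow> a \<in> P \<or> b \<in> P)"

definition t_prime :: "'k::field set \<Rightarrow> 'k set \<Rightarrow> bool" where
  "t_prime R P \<longleftrightarrow> prime_ideal R P \<and> t_ideal R P"

definition t_maximal :: "'k::field set \<Rightarrow> 'k set \<Rightarrow> bool" where
  "t_maximal R M \<longleftrightarrow> t_ideal R M \<and> M \<noteq> R \<and>
     (\<forall>N. t_ideal R N \<and> N \<noteq> R \<and> M \<subseteq> N \<longrightarrow> N = M)"

definition localization :: "'k::field set \<Rightarrow> 'k set \<Rightarrow> 'k set" where
  "localization R M = {a / s | a s. a \<in> R \<and> s \<in> R \<and> s \<notin> M}"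

definition valuation_domain :: "'k::field set \<Rightarrow> bool" where
  "valuation_domain V \<longleftrightarrow> (\<forall>x. x \<noteq> 0 \<longrightarrow> x \<in> V \<or> inverse x \<in> V)"

definition PvMD :: "'k::field set \<Rightarrow> bool" where
  "PvMD R \<longleftrightarrow> (\<forall>M. t_maximal R M \<longrightarrow> valuation_domain (localization R M))"

definition primary_ideal :: "'k::field set \<Rightarrow> 'k set \<Rightarrow> bool" where
  "primary_ideal R Q \<longleftrightarrow> rideal R Q \<and> Q \<noteq> R \<and>
     (\<forall>a\<in>R. \<forall>b\<in>R. a * b \<in> Q \<longrightarrow> a \<in> Q \<or> b \<in> rad R Q)"

definition branched :: "'k::field set \<Rightarrow> 'k set \<Rightarrow> bool" where
  "branched R P \<longleftrightarrow> prime_ideal R P \<and> (\<exists>Q. primary_ideal R Q \<and> rad R Q = P \<and> Q \<noteq> P)"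

definition tRTP :: "'k::field set \<Rightarrow> bool" where
  "tRTP R \<longleftrightarrow> (\<forall>I. rideal R I \<and> I \<noteq> {0} \<longrightarrow>
     top_t R (iprod R I (colon R I)) = R \<or>
     rad R (top_t R (iprod R I (colon R I))) = top_t R (iprod R I (colon R I)))"

definition minimal_prime :: "'k::field set \<Rightarrow> 'k set \<Rightarrow> 'k set \<Rightarrow> bool" where
  "minimal_prime R I P \<longleftrightarrow> prime_ideal R P \<and> I \<subseteq> P \<and>
     (\<forall>Q. prime_ideal R Q \<and> I \<subseteq> Q \<and> Q \<subseteq> P \<longrightarrow> Q = P)"

definition minimal_t_prime :: "'k::field set \<Rightarrow> 'k set \<Rightarrow> 'k set \<Rightarrow> bool" where
  "minimal_t_prime R I P \<longleftrightarrow> t_prime R P \<and> I \<subseteq> P \<and>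
     (\<forall>Q. t_prime R Q \<and> I \<subseteq> Q \<and> Q \<subseteq> P \<longrightarrow> Q = P)"

end

theory Submission
  imports Defs
begin

locale dom0 =
  fixes R :: "'k::field set"
  assumes sub: "is_subring R"
begin

lemma R0[simp]: "0 \<in> R" and R1[simp]: "1 \<in> R"
  using sub unfolding is_subring_def by auto
lemma Radd[intro]: "a \<in> R \<Longrightarrow> b \<in> R \<Longrightarrow> a + b \<in> R"
  using sub unfolding is_subring_def by auto
lemma Rmul[intro]: "a \<in> R \<Longrightarrow> b \<in> R \<Longrightarrow> a * b \<in> R"
  using sub unfolding is_subring_def by auto
lemma Rneg[intro]: "a \<in> R \<Longrightarrow> - a \<in> R"
  using sub unfolding is_subring_def by auto
lemma Rdiff[intro]: "a \<in> R \<Longrightarrow> b \<in> R \<Longrightarrow> a - b \<in> R"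
  using Radd Rneg by (metis diff_conv_add_uminus)
lemma Rpow[intro]: "a \<in> R \<Longrightarrow> a ^ n \<in> R"
  by (induction n) auto

lemma sum_in: "finite F \<Longrightarrow> rsubmodule R X \<Longrightarrow> (\<And>s. s \<in> F \<Longrightarrow> f s \<in> X) \<Longrightarrow> sum f F \<in> X"
proof (induction F rule: finite_induct)
  case empty then show ?case by (simp add: rsubmodule_def)
next
  case (insert x F) then show ?case by (simp add: rsubmodule_def)
qed

lemma span_sub: "rsubmodule R X \<Longrightarrow> S \<subseteq> X \<Longrightarrow> rspan R S \<subseteq> X"
  unfolding rspan_def
proof clarify
  fix F r assume X: "rsubmodule R X" and SX: "S \<subseteq> X" and F: "finite F" "F \<subseteq> S" "\<forall>s\<in>F. r s \<in> R"
  show "(\<Sum>s\<in>F. r s * s) \<in> X"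
    by (rule sum_in[OF F(1) X]) (use X SX F in \<open>auto simp: rsubmodule_def\<close>)
qed

lemma span_incl: "S \<subseteq> rspan R S"
proof
  fix x assume "x \<in> S"
  then show "x \<in> rspan R S" unfolding rspan_def
    by (intro CollectI exI[of _ "{x}"] exI[of _ "\<lambda>_. 1"]) auto
qed

lemma span_mod: "rsubmodule R (rspan R S)"
  unfolding rsubmodule_def
proof (intro conjI ballI)
  show "0 \<in> rspan R S" unfolding rspan_def by (intro CollectI exI[of _ "{}"]) auto
next
  fix a b assume "a \<in> rspan R S" "b \<in> rspan R S"
  then obtain F1 r1 F2 r2 where 1: "finite F1" "F1 \<subseteq> S" "\<forall>s\<in>F1. r1 s \<in> R" "a = (\<Sum>s\<in>F1. r1 s * s)"
    and 2: "finite F2" "F2 \<subseteq> S" "\<forall>s\<in>F2. r2 s \<in> R" "b = (\<Sum>s\<in>F2. r2 s * s)"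
    unfolding rspan_def by blast
  define r where "r s = (if s \<in> F1 then r1 s else 0) + (if s \<in> F2 then r2 s else 0)" for s
  have "(\<Sum>s\<in>F1 \<union> F2. r s * s) = (\<Sum>s\<in>F1 \<union> F2. (if s \<in> F1 then r1 s * s else 0)) + (\<Sum>s\<in>F1 \<union> F2. (if s \<in> F2 then r2 s * s else 0))"
    unfolding sum.distrib[symmetric] by (rule sum.cong) (auto simp: r_def distrib_right)
  also have "\<dots> = a + b"
  proof -
    have f: "finite (F1 \<union> F2)" using 1 2 by auto
    have "(\<Sum>s\<in>F1 \<union> F2. (if s \<in> F1 then r1 s * s else 0)) = (\<Sum>s\<in>F1. r1 s * s)"
      using sum.inter_restrict[OF f, of "\<lambda>s. r1 s * s" F1] by (simp add: Int_absorb1)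
    moreover have "(\<Sum>s\<in>F1 \<union> F2. (if s \<in> F2 then r2 s * s else 0)) = (\<Sum>s\<in>F2. r2 s * s)"
      using sum.inter_restrict[OF f, of "\<lambda>s. r2 s * s" F2] by (simp add: Int_absorb1)
    ultimately show ?thesis using 1 2 by simp
  qed
  finally have "a + b = (\<Sum>s\<in>F1 \<union> F2. r s * s)" by simp
  moreover have "\<forall>s\<in>F1 \<union> F2. r s \<in> R" using 1 2 unfolding r_def by auto
  ultimately show "a + b \<in> rspan R S" unfolding rspan_def using 1 2
    by (intro CollectI exI[of _ "F1 \<union> F2"] exI[of _ r]) auto
next
  fix c a assume c: "c \<in> R" and "a \<in> rspan R S"
  then obtain F r where 1: "finite F" "F \<subseteq> S" "\<forall>s\<in>F. r s \<in> R" "a = (\<Sum>s\<in>F. r s * s)"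
    unfolding rspan_def by blast
  have "c * a = (\<Sum>s\<in>F. (c * r s) * s)" using 1 by (simp add: sum_distrib_left mult.assoc)
  then show "c * a \<in> rspan R S" unfolding rspan_def using 1 c
    by (intro CollectI exI[of _ F] exI[of _ "\<lambda>s. c * r s"]) auto
qed

lemma span_mono: "S \<subseteq> T \<Longrightarrow> rspan R S \<subseteq> rspan R T"
  by (meson span_incl span_mod span_sub subset_trans)

lemma mod_add: "rsubmodule R X \<Longrightarrow> a \<in> X \<Longrightarrow> b \<in> X \<Longrightarrow> a + b \<in> X"
  and mod_smul: "rsubmodule R X \<Longrightarrow> r \<in> R \<Longrightarrow> a \<in> X \<Longrightarrow> r * a \<in> X"
  and mod_0: "rsubmodule R X \<Longrightarrow> 0 \<in> X"
  unfolding rsubmodule_def by auto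

lemma mod_neg: "rsubmodule R X \<Longrightarrow> a \<in> X \<Longrightarrow> - a \<in> X"
  using mod_smul[of X "-1" a] Rneg[OF R1] by auto

lemma R_mod: "rsubmodule R R"
  unfolding rsubmodule_def by auto

lemma ideal_mod: "rideal R I \<Longrightarrow> rsubmodule R I" and ideal_R: "rideal R I \<Longrightarrow> I \<subseteq> R"
  unfolding rideal_def by auto

lemma ideal_add: "rideal R I \<Longrightarrow> a \<in> I \<Longrightarrow> b \<in> I \<Longrightarrow> a + b \<in> I"
  and ideal_mul: "rideal R I \<Longrightarrow> r \<in> R \<Longrightarrow> a \<in> I \<Longrightarrow> r * a \<in> I"
  and ideal_mul2: "rideal R I \<Longrightarrow> r \<in> R \<Longrightarrow> a \<in> I \<Longrightarrow> a * r \<in> I"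
  and ideal_0: "rideal R I \<Longrightarrow> 0 \<in> I"
  unfolding rideal_def rsubmodule_def by (auto simp: mult.commute)

lemma ideal_in_R: "rideal R I \<Longrightarrow> a \<in> I \<Longrightarrow> a \<in> R"
  unfolding rideal_def by auto

lemma ideal_pow: "rideal R I \<Longrightarrow> a \<in> I \<Longrightarrow> n > 0 \<Longrightarrow> a ^ n \<in> I"
  by (cases n) (simp_all add: ideal_mul2 Rpow ideal_in_R)

lemma ideal_one: "rideal R I \<Longrightarrow> 1 \<in> I \<Longrightarrow> I = R"
proof (rule equalityI)
  assume I: "rideal R I" "1 \<in> I"
  show "I \<subseteq> R" using ideal_R[OF I(1)] .
  show "R \<subseteq> I"
  proof
    fix r assume "r \<in> R"
    then have "r * 1 \<in> I" using ideal_mul[OF I(1) _ I(2)] by blast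
    then show "r \<in> I" by simp
  qed
qed

lemma R_ideal: "rideal R R" unfolding rideal_def using R_mod by auto

lemma span_ideal: "S \<subseteq> R \<Longrightarrow> rideal R (rspan R S)"
  unfolding rideal_def using span_mod span_sub[OF R_mod] by auto

lemma span_in_ideal: "rideal R I \<Longrightarrow> S \<subseteq> I \<Longrightarrow> rspan R S \<subseteq> I"
  using span_sub ideal_mod by blast

lemma span_single: "rspan R {z} = {r * z | r. r \<in> R}"
proof
  have "rsubmodule R {r * z | r. r \<in> R}" unfolding rsubmodule_def
  proof (intro conjI ballI)
    show "0 \<in> {r * z | r. r \<in> R}" by (auto intro: exI[of _ 0])
  next
    fix a b assume "a \<in> {r * z | r. r \<in> R}" "b \<in> {r * z | r. r \<in> R}"
    then obtain r1 r2 where "r1 \<in> R" "r2 \<in> R" "a = r1 * z" "b = r2 * z" by auto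
    then show "a + b \<in> {r * z | r. r \<in> R}" by (auto intro!: exI[of _ "r1 + r2"] simp: distrib_right)
  next
    fix c a assume "c \<in> R" "a \<in> {r * z | r. r \<in> R}"
    then obtain r1 where "r1 \<in> R" "a = r1 * z" by auto
    then show "c * a \<in> {r * z | r. r \<in> R}" using \<open>c \<in> R\<close> by (auto intro!: exI[of _ "c * r1"] simp: mult.assoc)
  qed
  moreover have "z \<in> {r * z | r. r \<in> R}" by (auto intro: exI[of _ 1])
  ultimately show "rspan R {z} \<subseteq> {r * z | r. r \<in> R}" using span_sub by blast
next
  show "{r * z | r. r \<in> R} \<subseteq> rspan R {z}"
    using span_mod[of "{z}"] span_incl[of "{z}"] unfolding rsubmodule_def by auto
qed

lemma fin_gen_single: "fin_gen R (rspan R {z})"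
  unfolding fin_gen_def by auto

lemma colon_mod: "rsubmodule R (colon R B)"
  unfolding rsubmodule_def colon_def by (auto simp: distrib_right mult.assoc)

lemma pre_mod: "rsubmodule R A \<Longrightarrow> rsubmodule R {b. x * b \<in> A}"
  unfolding rsubmodule_def by (auto simp: distrib_left mult.left_commute)

lemma colon_span: "colon R (rspan R F) = colon R F"
proof
  show "colon R (rspan R F) \<subseteq> colon R F" using span_incl unfolding colon_def by blast
next
  show "colon R F \<subseteq> colon R (rspan R F)"
  proof
    fix x assume "x \<in> colon R F"
    then have "F \<subseteq> {b. x * b \<in> R}" unfolding colon_def by auto
    then have "rspan R F \<subseteq> {b. x * b \<in> R}" using span_sub pre_mod[OF R_mod] by blast
    then show "x \<in> colon R (rspan R F)" unfolding colon_def by auto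
  qed
qed

lemma colon_anti: "B \<subseteq> B' \<Longrightarrow> colon A B' \<subseteq> colon A B"
  unfolding colon_def by auto

lemma vop_mono: "J \<subseteq> J' \<Longrightarrow> vop R J \<subseteq> vop R J'"
  unfolding vop_def by (rule colon_anti, rule colon_anti, assumption)

lemma vop_incl: "J \<subseteq> vop R J"
  unfolding vop_def colon_def by (auto simp: mult.commute)

lemma vop_mod: "rsubmodule R (vop R J)"
  unfolding vop_def by (rule colon_mod)

lemma one_colon: "J \<subseteq> R \<Longrightarrow> 1 \<in> colon R J"
  unfolding colon_def by auto

lemma colonD: "x \<in> colon A B \<Longrightarrow> b \<in> B \<Longrightarrow> x * b \<in> A"
  unfolding colon_def by blast

lemma colonI: "(\<And>b. b \<in> B \<Longrightarrow> x * b \<in> A) \<Longrightarrow> x \<in> colon A B"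
  unfolding colon_def by blast

lemma vop_R: "J \<subseteq> R \<Longrightarrow> vop R J \<subseteq> R"
proof
  fix x assume J: "J \<subseteq> R" and x: "x \<in> vop R J"
  have "x * 1 \<in> R" using colonD[OF x[unfolded vop_def] one_colon[OF J]] .
  then show "x \<in> R" by simp
qed

lemma vop_idem: "vop R (vop R J) = vop R J"
proof -
  have "colon R (vop R J) = colon R J"
  proof
    show "colon R (vop R J) \<subseteq> colon R J" using vop_incl colon_anti by blast
    show "colon R J \<subseteq> colon R (vop R J)" unfolding vop_def colon_def by (auto simp: mult.commute)
  qed
  then show ?thesis unfolding vop_def by simp
qed

lemma vop_span: "vop R (rspan R F) = vop R F"
  unfolding vop_def by (simp add: colon_span)

lemma mem_vop: "y \<in> vop R J \<longleftrightarrow> (\<forall>w. (\<forall>b\<in>J. w * b \<in> R) \<longrightarrow> y * w \<in> R)"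
  unfolding vop_def colon_def by auto

lemma vop_scale: "y \<in> vop R (rspan R G) \<Longrightarrow> x * y \<in> vop R (rspan R ((*) x ` G))"
  unfolding vop_span mem_vop
proof (intro allI impI)
  fix w assume H: "\<forall>w. (\<forall>b\<in>G. w * b \<in> R) \<longrightarrow> y * w \<in> R" and W: "\<forall>b\<in>(*) x ` G. w * b \<in> R"
  have "\<forall>b\<in>G. (w * x) * b \<in> R" using W by (auto simp: mult.assoc)
  then have "y * (w * x) \<in> R" using H by blast
  then show "x * y * w \<in> R" by (simp add: ac_simps)
qed

lemma mem_top_t: "x \<in> top_t R I \<longleftrightarrow> (\<exists>J. J \<subseteq> I \<and> J \<noteq> {0} \<and> fin_gen R J \<and> x \<in> vop R J)"
  unfolding top_t_def by blast

end

context dom0 begin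

lemma span_empty: "rspan R {} = {0}"
  unfolding rspan_def by auto

lemma span_nz: "rspan R G \<noteq> {0} \<Longrightarrow> \<exists>g\<in>G. g \<noteq> 0"
proof (rule ccontr)
  assume a: "rspan R G \<noteq> {0}" "\<not> (\<exists>g\<in>G. g \<noteq> 0)"
  have "rsubmodule R {0}" unfolding rsubmodule_def by auto
  then have "rspan R G \<subseteq> {0}" using a(2) span_sub by blast
  moreover have "0 \<in> rspan R G" using span_mod mod_0 by blast
  ultimately show False using a(1) by blast
qed

lemma span_nz2: "g \<in> G \<Longrightarrow> g \<noteq> 0 \<Longrightarrow> rspan R G \<noteq> {0}"
  using span_incl by blast

lemma top_t_incl: "rideal R I \<Longrightarrow> I \<noteq> {0} \<Longrightarrow> I \<subseteq> top_t R I"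
proof
  fix x assume I: "rideal R I" "I \<noteq> {0}" and x: "x \<in> I"
  obtain i where i: "i \<in> I" "i \<noteq> 0" using I ideal_0 by blast
  define g where "g = (if x = 0 then i else x)"
  have g: "g \<in> I" "g \<noteq> 0" using i x by (auto simp: g_def)
  have J: "rspan R {g} \<subseteq> I" using span_in_ideal[OF I(1)] g by auto
  have Jn: "rspan R {g} \<noteq> {0}" using span_nz2[of g "{g}"] g by auto
  have "x \<in> vop R (rspan R {g})"
  proof (cases "x = 0")
    case True then show ?thesis using mod_0[OF vop_mod] by simp
  next
    case False
    then have "x \<in> rspan R {g}" using span_incl g_def by auto
    then show ?thesis using vop_incl by blast
  qed
  then show "x \<in> top_t R I" unfolding mem_top_t using J Jn fin_gen_single by blast
qed

lemma top_t_R: "I \<subseteq> R \<Longrightarrow> top_t R I \<subseteq> R"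
  unfolding top_t_def using vop_R by blast

lemma top_t_mono: "I \<subseteq> I' \<Longrightarrow> top_t R I \<subseteq> top_t R I'"
  unfolding top_t_def by blast

lemma fg_D: "fin_gen R J \<Longrightarrow> \<exists>F. finite F \<and> J = rspan R F"
  unfolding fin_gen_def by auto

lemma nz_sub: "A \<subseteq> B \<Longrightarrow> A \<noteq> {0} \<Longrightarrow> 0 \<in> A \<Longrightarrow> B \<noteq> {0}"
  by auto

lemma span_0: "0 \<in> rspan R F"
  using mod_0[OF span_mod] .

lemma span_union_sub: "F1 \<subseteq> I \<Longrightarrow> F2 \<subseteq> I \<Longrightarrow> rideal R I \<Longrightarrow> rspan R (F1 \<union> F2) \<subseteq> I"
  using span_in_ideal[of I "F1 \<union> F2"] by simp

lemma top_t_ideal: assumes I: "rideal R I" "I \<noteq> {0}" shows "rideal R (top_t R I)"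
proof -
  have "rsubmodule R (top_t R I)" unfolding rsubmodule_def
  proof (intro conjI ballI)
    show "0 \<in> top_t R I" using top_t_incl[OF I] ideal_0[OF I(1)] by (rule subsetD)
  next
    fix a b assume "a \<in> top_t R I" "b \<in> top_t R I"
    then obtain J1 J2 where 1: "J1 \<subseteq> I" "J1 \<noteq> {0}" "fin_gen R J1" "a \<in> vop R J1"
      and 2: "J2 \<subseteq> I" "J2 \<noteq> {0}" "fin_gen R J2" "b \<in> vop R J2" unfolding mem_top_t by blast
    obtain F1 F2 where F: "finite F1" "J1 = rspan R F1" "finite F2" "J2 = rspan R F2"
      using 1 2 fg_D by metis
    define J where "J = rspan R (F1 \<union> F2)"
    have s1: "J1 \<subseteq> J" and s2: "J2 \<subseteq> J" unfolding J_def F using span_mono[of F1 "F1 \<union> F2"] span_mono[of F2 "F1 \<union> F2"] by auto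
    have "F1 \<subseteq> I" using span_incl[of F1] F(2) 1(1) by simp
    moreover have "F2 \<subseteq> I" using span_incl[of F2] F(4) 2(1) by simp
    ultimately have JI: "J \<subseteq> I" unfolding J_def using span_union_sub I(1) by simp
    have Jn: "J \<noteq> {0}" using nz_sub[OF s1 1(2)] F(2) span_0 by simp
    have Jf: "fin_gen R J" unfolding J_def fin_gen_def using F by auto
    have "a \<in> vop R J" using vop_mono[OF s1] 1(4) by (rule subsetD)
    moreover have "b \<in> vop R J" using vop_mono[OF s2] 2(4) by (rule subsetD)
    ultimately have "a + b \<in> vop R J" using mod_add[OF vop_mod] by simp
    then show "a + b \<in> top_t R I" unfolding mem_top_t using JI Jn Jf by blast
  next
    fix r a assume r: "r \<in> R" and "a \<in> top_t R I"
    then obtain J where "J \<subseteq> I" "J \<noteq> {0}" "fin_gen R J" "a \<in> vop R J" unfolding mem_top_t by blast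
    moreover then have "r * a \<in> vop R J" using mod_smul[OF vop_mod r] by simp
    ultimately show "r * a \<in> top_t R I" unfolding mem_top_t by blast
  qed
  then show ?thesis unfolding rideal_def using top_t_R[OF ideal_R[OF I(1)]] by simp
qed

lemma top_t_idem: assumes I: "rideal R I" "I \<noteq> {0}" shows "top_t R (top_t R I) = top_t R I"
proof
  have T: "rideal R (top_t R I)" "top_t R I \<noteq> {0}" using top_t_ideal[OF I] nz_sub[OF top_t_incl[OF I] I(2) ideal_0[OF I(1)]] by auto
  show "top_t R I \<subseteq> top_t R (top_t R I)" using top_t_incl[OF T] .
  show "top_t R (top_t R I) \<subseteq> top_t R I"
  proof
    fix y assume "y \<in> top_t R (top_t R I)"
    then obtain L where L: "L \<subseteq> top_t R I" "L \<noteq> {0}" "fin_gen R L" "y \<in> vop R L" unfolding mem_top_t by blast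
    obtain G where G: "finite G" "L = rspan R G" using L fg_D by blast
    have "\<forall>g\<in>G. \<exists>F. finite F \<and> rspan R F \<subseteq> I \<and> rspan R F \<noteq> {0} \<and> g \<in> vop R (rspan R F)"
    proof
      fix g assume "g \<in> G"
      then have "g \<in> top_t R I" using L G span_incl by blast
      then obtain J where "J \<subseteq> I" "J \<noteq> {0}" "fin_gen R J" "g \<in> vop R J" unfolding mem_top_t by blast
      then show "\<exists>F. finite F \<and> rspan R F \<subseteq> I \<and> rspan R F \<noteq> {0} \<and> g \<in> vop R (rspan R F)"
        using fg_D by metis
    qed
    then obtain F where F: "\<forall>g\<in>G. finite (F g) \<and> rspan R (F g) \<subseteq> I \<and> rspan R (F g) \<noteq> {0} \<and> g \<in> vop R (rspan R (F g))"
      by metis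
    define U where "U = \<Union>(F ` G)"
    have Uf: "finite U" unfolding U_def using F G by auto
    have UI: "rspan R U \<subseteq> I" unfolding U_def
      using span_in_ideal[OF I(1)] F span_incl by (meson UN_least subset_trans)
    have "G \<noteq> {}" using L G span_empty by auto
    then obtain g0 where g0: "g0 \<in> G" by blast
    have sub: "\<And>g. g \<in> G \<Longrightarrow> rspan R (F g) \<subseteq> rspan R U" unfolding U_def by (intro span_mono) auto
    have "rspan R (F g0) \<noteq> {0}" using F g0 by blast
    then have Un: "rspan R U \<noteq> {0}" using nz_sub[OF sub[OF g0]] span_0 by blast
    have "G \<subseteq> vop R (rspan R U)"
    proof
      fix g assume g: "g \<in> G"
      then have "g \<in> vop R (rspan R (F g))" using F by blast
      with vop_mono[OF sub[OF g]] show "g \<in> vop R (rspan R U)" by (rule subsetD)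
    qed
    then have LU: "L \<subseteq> vop R (rspan R U)" using span_sub[OF vop_mod] G(2) by simp
    have "y \<in> vop R (rspan R U)" using vop_mono[OF LU] L(4) vop_idem by auto
    moreover have "fin_gen R (rspan R U)" using Uf fin_gen_def by auto
    ultimately show "y \<in> top_t R I" unfolding mem_top_t using UI Un by blast
  qed
qed

lemma t_ideal_top: assumes "rideal R I" "I \<noteq> {0}" shows "t_ideal R (top_t R I)"
  unfolding t_ideal_def using top_t_ideal[OF assms] top_t_idem[OF assms]
    nz_sub[OF top_t_incl[OF assms] assms(2) ideal_0[OF assms(1)]] by simp

lemma t_ideal_vop: "t_ideal R I \<Longrightarrow> J \<subseteq> I \<Longrightarrow> J \<noteq> {0} \<Longrightarrow> fin_gen R J \<Longrightarrow> vop R J \<subseteq> I"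
  unfolding t_ideal_def using mem_top_t by blast

lemma t_idealD: "t_ideal R I \<Longrightarrow> rideal R I" "t_ideal R I \<Longrightarrow> I \<noteq> {0}"
  unfolding t_ideal_def by auto

lemma t_ideal_vop2: assumes T: "t_ideal R I" and G: "finite G" "G \<subseteq> I" "g \<in> G" "g \<noteq> 0"
  shows "vop R (rspan R G) \<subseteq> I"
proof (rule t_ideal_vop[OF T])
  show "rspan R G \<subseteq> I" using span_in_ideal[OF t_idealD(1)[OF T] G(2)] .
  show "rspan R G \<noteq> {0}" using span_nz2[OF G(3,4)] .
  show "fin_gen R (rspan R G)" unfolding fin_gen_def by (intro exI[of _ G]) (simp add: G(1))
qed

lemma chain_finite: assumes "C \<in> chains A" "C \<noteq> {}" "finite F" "F \<subseteq> \<Union>C"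
  shows "\<exists>N\<in>C. F \<subseteq> N"
proof -
  have "subset.chain A C" using assms(1) unfolding chains_alt_def by simp
  then obtain N where "N \<in> C" "F \<subseteq> N" using finite_subset_Union_chain[of F C A] assms(2-4) by metis
  then show ?thesis by blast
qed

lemma chain_two: assumes "C \<in> chains A" "a \<in> \<Union>C" "b \<in> \<Union>C" shows "\<exists>N\<in>C. a \<in> N \<and> b \<in> N"
  using assms unfolding chains_def chain_subset_def by blast

lemma union_chain_ideal: assumes "C \<in> chains A" "C \<noteq> {}" "\<forall>N\<in>C. rideal R N" shows "rideal R (\<Union>C)"
  unfolding rideal_def rsubmodule_def
proof (intro conjI ballI)
  show "0 \<in> \<Union>C" using assms ideal_0 by blast
  show "\<Union>C \<subseteq> R" using assms ideal_R by blast
next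
  fix a b assume "a \<in> \<Union>C" "b \<in> \<Union>C"
  then obtain N where "N \<in> C" "a \<in> N" "b \<in> N" using chain_two[OF assms(1)] by blast
  then show "a + b \<in> \<Union>C" using assms ideal_add by blast
next
  fix r a assume "r \<in> R" "a \<in> \<Union>C"
  then show "r * a \<in> \<Union>C" using assms ideal_mul by blast
qed

lemma exists_tmax: assumes I: "t_ideal R I" "I \<noteq> R" shows "\<exists>M. t_maximal R M \<and> I \<subseteq> M"
proof -
  define A where "A = {N. t_ideal R N \<and> N \<noteq> R \<and> I \<subseteq> N}"
  have "\<forall>C\<in>chains A. \<exists>U\<in>A. \<forall>X\<in>C. X \<subseteq> U"
  proof
    fix C assume C: "C \<in> chains A"
    show "\<exists>U\<in>A. \<forall>X\<in>C. X \<subseteq> U"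
    proof (cases "C = {}")
      case True then show ?thesis using I unfolding A_def by blast
    next
      case False
      have CA: "C \<subseteq> A" using C unfolding chains_def by auto
      have id: "rideal R (\<Union>C)" using union_chain_ideal[OF C False] CA unfolding A_def t_ideal_def by auto
      have IU: "I \<subseteq> \<Union>C" using CA False unfolding A_def by blast
      have nz: "\<Union>C \<noteq> {0}" using nz_sub[OF IU t_idealD(2)[OF I(1)] ideal_0[OF t_idealD(1)[OF I(1)]]] .
      have "top_t R (\<Union>C) \<subseteq> \<Union>C"
      proof
        fix x assume "x \<in> top_t R (\<Union>C)"
        then obtain J where J: "J \<subseteq> \<Union>C" "J \<noteq> {0}" "fin_gen R J" "x \<in> vop R J" unfolding mem_top_t by blast
        obtain F where F: "finite F" "J = rspan R F" using J fg_D by blast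
        have "F \<subseteq> \<Union>C" using span_incl[of F] F(2) J(1) by simp
        then obtain N where N: "N \<in> C" "F \<subseteq> N" using chain_finite[OF C False F(1)] by blast
        then have tN: "t_ideal R N" using CA unfolding A_def by auto
        have "J \<subseteq> N" using span_in_ideal[OF t_idealD(1)[OF tN] N(2)] F(2) by simp
        then have "vop R J \<subseteq> N" using t_ideal_vop[OF tN _ J(2) J(3)] by simp
        then show "x \<in> \<Union>C" using J(4) N(1) by blast
      qed
      then have "t_ideal R (\<Union>C)" unfolding t_ideal_def using id nz top_t_incl[OF id nz] by simp
      moreover have "\<Union>C \<noteq> R"
      proof
        assume "\<Union>C = R"
        then obtain N where N: "N \<in> C" "1 \<in> N" using R1 by blast
        then have "N \<in> A" using CA by blast
        then have "t_ideal R N" "N \<noteq> R" unfolding A_def by auto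
        then show False using ideal_one[OF t_idealD(1) N(2)] by simp
      qed
      ultimately show ?thesis using IU unfolding A_def by blast
    qed
  qed
  from Zorn_Lemma2[OF this] obtain M where M: "M \<in> A" "\<forall>X\<in>A. M \<subseteq> X \<longrightarrow> X = M" by blast
  then have "t_maximal R M" unfolding t_maximal_def A_def by blast
  then show ?thesis using M unfolding A_def by blast
qed

lemma primeD: assumes "prime_ideal R P"
  shows "rideal R P" "P \<noteq> R" "\<And>a b. a \<in> R \<Longrightarrow> b \<in> R \<Longrightarrow> a * b \<in> P \<Longrightarrow> a \<in> P \<or> b \<in> P"
  using assms unfolding prime_ideal_def by auto

lemma prime_1: "prime_ideal R P \<Longrightarrow> 1 \<notin> P"
  using primeD ideal_one by blast

lemma prime_0: "prime_ideal R P \<Longrightarrow> 0 \<in> P"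
  using primeD ideal_0 by blast

lemma prime_notmul: "prime_ideal R P \<Longrightarrow> a \<in> R \<Longrightarrow> b \<in> R \<Longrightarrow> a \<notin> P \<Longrightarrow> b \<notin> P \<Longrightarrow> a * b \<notin> P"
  using primeD by blast

lemma prime_pow: assumes "prime_ideal R P" "a \<in> R" "a ^ n \<in> P" shows "a \<in> P"
  using assms(3)
proof (induction n)
  case 0 then show ?case using prime_1[OF assms(1)] by simp
next
  case (Suc n) then show ?case using primeD(3)[OF assms(1) assms(2) Rpow[OF assms(2)]] by auto
qed

lemma prime_powN: "prime_ideal R P \<Longrightarrow> a \<in> R \<Longrightarrow> a \<notin> P \<Longrightarrow> a ^ n \<notin> P"
  using prime_pow by blast

lemma prime_R: "prime_ideal R P \<Longrightarrow> x \<in> P \<Longrightarrow> x \<in> R"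
  using primeD(1) ideal_in_R by blast

lemma ideal_plus: assumes Q: "rideal R Q" and a: "a \<in> R"
  shows "rideal R {q + r * a | q r. q \<in> Q \<and> r \<in> R}" (is "rideal R ?N")
  unfolding rideal_def rsubmodule_def
proof (intro conjI ballI)
  show "0 \<in> ?N" using Q ideal_0 by (auto intro!: exI[of _ 0])
next
  fix x y assume "x \<in> ?N" "y \<in> ?N"
  then obtain q1 r1 q2 r2 where "q1 \<in> Q" "r1 \<in> R" "q2 \<in> Q" "r2 \<in> R" "x = q1 + r1 * a" "y = q2 + r2 * a" by blast
  moreover then have "x + y = (q1 + q2) + (r1 + r2) * a" by (simp add: algebra_simps)
  moreover have "q1 + q2 \<in> Q" using ideal_add[OF Q] calculation by blast
  moreover have "r1 + r2 \<in> R" using calculation by blast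
  ultimately show "x + y \<in> ?N" by blast
next
  fix c x assume "c \<in> R" "x \<in> ?N"
  then obtain q1 r1 where "q1 \<in> Q" "r1 \<in> R" "x = q1 + r1 * a" by blast
  moreover then have "c * x = (c * q1) + (c * r1) * a" by (simp add: algebra_simps)
  moreover have "c * q1 \<in> Q" using ideal_mul[OF Q \<open>c \<in> R\<close>] calculation by blast
  moreover have "c * r1 \<in> R" using calculation \<open>c \<in> R\<close> by blast
  ultimately show "c * x \<in> ?N" by blast
next
  show "?N \<subseteq> R" using Q a ideal_in_R by blast
qed

lemma tmax_prime: assumes M: "t_maximal R M" shows "prime_ideal R M"
proof -
  have Mt: "t_ideal R M" "M \<noteq> R" using M unfolding t_maximal_def by auto
  have Mi: "rideal R M" "M \<noteq> {0}" using Mt t_idealD by auto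
  have "a \<in> M \<or> b \<in> M" if ab: "a \<in> R" "b \<in> R" "a * b \<in> M" for a b
  proof (rule ccontr)
    assume n: "\<not> (a \<in> M \<or> b \<in> M)"
    define N0 where "N0 = rspan R (M \<union> {a})"
    have N0i: "rideal R N0" unfolding N0_def using span_ideal[of "M \<union> {a}"] ideal_R[OF Mi(1)] ab(1) by simp
    have MN0: "M \<subseteq> N0" "a \<in> N0" unfolding N0_def using span_incl[of "M \<union> {a}"] by auto
    have N0n: "N0 \<noteq> {0}" using nz_sub[OF MN0(1) Mi(2) ideal_0[OF Mi(1)]] .
    have T: "t_ideal R (top_t R N0)" using t_ideal_top[OF N0i N0n] .
    have MT: "M \<subseteq> top_t R N0" "a \<in> top_t R N0" using MN0 top_t_incl[OF N0i N0n] by auto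
    have "top_t R N0 = R"
    proof (rule ccontr)
      assume "top_t R N0 \<noteq> R"
      then have "top_t R N0 = M" using M T MT(1) unfolding t_maximal_def by blast
      then show False using MT n by blast
    qed
    then have "1 \<in> top_t R N0" by simp
    then obtain J where J: "J \<subseteq> N0" "J \<noteq> {0}" "fin_gen R J" "1 \<in> vop R J" unfolding mem_top_t by blast
    obtain G where G: "finite G" "J = rspan R G" using J fg_D by blast
    have bsc: "b * 1 \<in> vop R (rspan R ((*) b ` G))" using vop_scale[of 1 G b] J(4) G(2) by simp
    have md: "rsubmodule R {x. b * x \<in> M}" using pre_mod[OF ideal_mod[OF Mi(1)]] .
    have "M \<union> {a} \<subseteq> {x. b * x \<in> M}"
    proof
      fix x assume "x \<in> M \<union> {a}"
      then show "x \<in> {x. b * x \<in> M}"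
      proof
        assume "x \<in> M" then show ?thesis using ideal_mul[OF Mi(1) ab(2)] by simp
      next
        assume "x \<in> {a}" then show ?thesis using ab(3) by (simp add: mult.commute)
      qed
    qed
    then have "N0 \<subseteq> {x. b * x \<in> M}" unfolding N0_def using span_sub[OF md] by simp
    moreover have "G \<subseteq> N0" using span_incl[of G] G(2) J(1) by simp
    ultimately have bG: "(*) b ` G \<subseteq> M" by blast
    obtain g where g: "g \<in> G" "g \<noteq> 0" using span_nz[of G] J(2) G(2) by auto
    have "b \<noteq> 0" using n ideal_0[OF Mi(1)] by auto
    then have "b * g \<in> (*) b ` G" "b * g \<noteq> 0" using g by auto
    then have "vop R (rspan R ((*) b ` G)) \<subseteq> M"
      using t_ideal_vop2[OF Mt(1), of "(*) b ` G" "b * g"] G(1) bG by auto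
    then show False using bsc n by auto
  qed
  then show ?thesis unfolding prime_ideal_def using Mi Mt by blast
qed

lemma prime_avoid:
  assumes I: "rideal R I" and S: "S \<subseteq> R" "1 \<in> S" "\<And>a b. a \<in> S \<Longrightarrow> b \<in> S \<Longrightarrow> a * b \<in> S" and d: "I \<inter> S = {}"
  shows "\<exists>Q. prime_ideal R Q \<and> I \<subseteq> Q \<and> Q \<inter> S = {}"
proof -
  define A where "A = {N. rideal R N \<and> I \<subseteq> N \<and> N \<inter> S = {}}"
  have "\<forall>C\<in>chains A. \<exists>U\<in>A. \<forall>X\<in>C. X \<subseteq> U"
  proof
    fix C assume C: "C \<in> chains A"
    show "\<exists>U\<in>A. \<forall>X\<in>C. X \<subseteq> U"
    proof (cases "C = {}")
      case True then show ?thesis using I d unfolding A_def by blast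
    next
      case False
      have CA: "C \<subseteq> A" using C unfolding chains_def by auto
      have "rideal R (\<Union>C)" using union_chain_ideal[OF C False] CA unfolding A_def by auto
      moreover have "I \<subseteq> \<Union>C" "\<Union>C \<inter> S = {}" using CA False unfolding A_def by blast+
      ultimately show ?thesis unfolding A_def by blast
    qed
  qed
  from Zorn_Lemma2[OF this] obtain Q where Q: "Q \<in> A" "\<forall>X\<in>A. Q \<subseteq> X \<longrightarrow> X = Q" by blast
  have "rideal R Q \<and> I \<subseteq> Q \<and> Q \<inter> S = {}" using Q(1) unfolding A_def by (rule CollectD)
  then have Qi: "rideal R Q" "I \<subseteq> Q" "Q \<inter> S = {}" by (rule conjunct1, rule conjunct1[OF conjunct2], rule conjunct2[OF conjunct2])
  have "a \<in> Q \<or> b \<in> Q" if ab: "a \<in> R" "b \<in> R" "a * b \<in> Q" for a b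
  proof (rule ccontr)
    assume n: "\<not> (a \<in> Q \<or> b \<in> Q)"
    have ex: "\<exists>s\<in>S. \<exists>q\<in>Q. \<exists>r\<in>R. s = q + r * x" if x: "x \<in> R" "x \<notin> Q" for x
    proof (rule ccontr)
      assume nn: "\<not> ?thesis"
      define N where "N = {q + r * x | q r. q \<in> Q \<and> r \<in> R}"
      have QN: "Q \<subseteq> N"
      proof
        fix q assume "q \<in> Q"
        then have "q = q + 0 * x \<and> q \<in> Q \<and> 0 \<in> R" by simp
        then show "q \<in> N" unfolding N_def by blast
      qed
      have "rideal R N" unfolding N_def using ideal_plus[OF Qi(1) x(1)] .
      moreover have "I \<subseteq> N" using Qi(2) QN by (rule subset_trans)
      moreover have "N \<inter> S = {}" using nn unfolding N_def by blast
      ultimately have "N \<in> A" unfolding A_def by blast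
      moreover have "x \<in> N"
      proof -
        have "x = 0 + 1 * x \<and> 0 \<in> Q \<and> (1::'k) \<in> R" using ideal_0[OF Qi(1)] by simp
        then show ?thesis unfolding N_def by blast
      qed
      ultimately show False using Q(2) QN x(2) by blast
    qed
    obtain s1 q1 r1 where 1: "s1 \<in> S" "q1 \<in> Q" "r1 \<in> R" "s1 = q1 + r1 * a" using ex[OF ab(1)] n by blast
    obtain s2 q2 r2 where 2: "s2 \<in> S" "q2 \<in> Q" "r2 \<in> R" "s2 = q2 + r2 * b" using ex[OF ab(2)] n by blast
    have e: "s1 * s2 = q1 * s2 + ((r1 * a) * q2 + (r1 * r2) * (a * b))" using 1 2 by (simp add: algebra_simps)
    have s2R: "s2 \<in> R" using 2(1) S(1) by blast
    have "q1 * s2 \<in> Q" using ideal_mul2[OF Qi(1) s2R 1(2)] .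
    moreover have "(r1 * a) * q2 \<in> Q" using ideal_mul[OF Qi(1) Rmul[OF 1(3) ab(1)] 2(2)] .
    moreover have "(r1 * r2) * (a * b) \<in> Q" using ideal_mul[OF Qi(1) Rmul[OF 1(3) 2(3)] ab(3)] .
    ultimately have "s1 * s2 \<in> Q" unfolding e using ideal_add[OF Qi(1)] by simp
    moreover have "s1 * s2 \<in> S" using S(3)[OF 1(1) 2(1)] .
    ultimately show False using Qi(3) by blast
  qed
  moreover have "Q \<noteq> R" using Qi S by blast
  ultimately show ?thesis unfolding prime_ideal_def using Qi by blast
qed

lemma minimal_primeD: assumes "minimal_prime R I P"
  shows "prime_ideal R P" "I \<subseteq> P" "\<And>Q. prime_ideal R Q \<Longrightarrow> I \<subseteq> Q \<Longrightarrow> Q \<subseteq> P \<Longrightarrow> Q = P"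
  using assms unfolding minimal_prime_def by auto

lemma minimal_primeI: assumes "prime_ideal R P" "I \<subseteq> P" "\<And>Q. prime_ideal R Q \<Longrightarrow> I \<subseteq> Q \<Longrightarrow> Q \<subseteq> P \<Longrightarrow> Q = P"
  shows "minimal_prime R I P"
  using assms unfolding minimal_prime_def by auto

lemma minprime_pow:
  assumes mp: "minimal_prime R I P" and I: "rideal R I" and x: "x \<in> P"
  shows "\<exists>s\<in>R. s \<notin> P \<and> (\<exists>k. s * x ^ k \<in> I)"
proof (rule ccontr)
  assume n: "\<not> ?thesis"
  have P: "prime_ideal R P" "I \<subseteq> P" using mp unfolding minimal_prime_def by auto
  have xR: "x \<in> R" using P x prime_R by blast
  define S where "S = {s * x ^ k | s k. s \<in> R \<and> s \<notin> P}"
  have Sm: "s * x ^ k \<in> S" if "s \<in> R" "s \<notin> P" for s k unfolding S_def using that by blast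
  have "S \<subseteq> R" unfolding S_def using xR by auto
  moreover have "1 \<in> S" using Sm[of 1 0] prime_1[OF P(1)] by simp
  moreover have "a * b \<in> S" if ab0: "a \<in> S" "b \<in> S" for a b
  proof -
    obtain s1 k1 s2 k2 where ab: "a = s1 * x ^ k1" "b = s2 * x ^ k2" "s1 \<in> R" "s1 \<notin> P" "s2 \<in> R" "s2 \<notin> P"
      using ab0 unfolding S_def by blast
    have "a * b = (s1 * s2) * x ^ (k1 + k2)" unfolding ab by (simp add: power_add ac_simps)
    moreover have "s1 * s2 \<in> R" "s1 * s2 \<notin> P" using ab prime_notmul[OF P(1)] by auto
    ultimately show ?thesis using Sm by simp
  qed
  moreover have "I \<inter> S = {}" using n unfolding S_def by blast
  ultimately obtain Q where Q: "prime_ideal R Q" "I \<subseteq> Q" "Q \<inter> S = {}" using prime_avoid[OF I] by metis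
  have "Q \<subseteq> P"
  proof
    fix q assume q: "q \<in> Q"
    show "q \<in> P"
    proof (rule ccontr)
      assume "q \<notin> P"
      then have "q * x ^ 0 \<in> S" using Sm prime_R[OF Q(1) q] by blast
      then show False using q Q(3) by auto
    qed
  qed
  then have "Q = P" using minimal_primeD(3)[OF mp Q(1) Q(2)] by simp
  moreover have "1 * x ^ 1 \<in> S" using Sm[of 1 1] prime_1[OF P(1)] by simp
  ultimately show False using x Q(3) by auto
qed

end

context dom0 begin

definition dv :: "'k set \<Rightarrow> 'k \<Rightarrow> 'k \<Rightarrow> bool" where
  "dv P b a \<longleftrightarrow> (\<exists>s\<in>R. s \<notin> P \<and> (\<exists>r\<in>R. s * a = r * b))"

definition inloc :: "'k set \<Rightarrow> 'k \<Rightarrow> bool" where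
  "inloc P x \<longleftrightarrow> (\<exists>s\<in>R. s \<notin> P \<and> s * x \<in> R)"

lemma dvI: "s \<in> R \<Longrightarrow> s \<notin> P \<Longrightarrow> r \<in> R \<Longrightarrow> s * a = r * b \<Longrightarrow> dv P b a"
  unfolding dv_def by blast

lemma dvE: assumes "dv P b a" obtains s r where "s \<in> R" "s \<notin> P" "r \<in> R" "s * a = r * b"
  using assms unfolding dv_def by blast

lemma inlocI: "s \<in> R \<Longrightarrow> s \<notin> P \<Longrightarrow> s * x \<in> R \<Longrightarrow> inloc P x"
  unfolding inloc_def by blast

lemma inlocE: assumes "inloc P x" obtains s where "s \<in> R" "s \<notin> P" "s * x \<in> R"
  using assms unfolding inloc_def by blast

lemma dv_refl: "prime_ideal R P \<Longrightarrow> dv P a a"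
  using prime_1 by (intro dvI[of 1 _ 1]) auto

lemma dv_0: "prime_ideal R P \<Longrightarrow> dv P b 0"
  using prime_1 by (intro dvI[of 1 _ 0]) auto

lemma dv_trans: assumes P: "prime_ideal R P" and 1: "dv P a b" and 2: "dv P b c" shows "dv P a c"
proof -
  obtain s1 r1 where a: "s1 \<in> R" "s1 \<notin> P" "r1 \<in> R" "s1 * b = r1 * a" using 1 by (rule dvE)
  obtain s2 r2 where b: "s2 \<in> R" "s2 \<notin> P" "r2 \<in> R" "s2 * c = r2 * b" using 2 by (rule dvE)
  have "(s2 * s1) * c = (r2 * r1) * a"
  proof -
    have "(s2 * s1) * c = s1 * (s2 * c)" by (simp add: ac_simps)
    also have "\<dots> = r2 * (s1 * b)" using b(4) by (simp add: ac_simps)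
    also have "\<dots> = (r2 * r1) * a" using a(4) by (simp add: ac_simps)
    finally show ?thesis .
  qed
  moreover have "s2 * s1 \<notin> P" using prime_notmul[OF P b(1) a(1) b(2) a(2)] .
  ultimately show ?thesis using a b by (intro dvI[of "s2 * s1" _ "r2 * r1"]) auto
qed

lemma dv_add: assumes P: "prime_ideal R P" and 1: "dv P a b" and 2: "dv P a c" shows "dv P a (b + c)"
proof -
  obtain s1 r1 where a: "s1 \<in> R" "s1 \<notin> P" "r1 \<in> R" "s1 * b = r1 * a" using 1 by (rule dvE)
  obtain s2 r2 where b: "s2 \<in> R" "s2 \<notin> P" "r2 \<in> R" "s2 * c = r2 * a" using 2 by (rule dvE)
  have "(s1 * s2) * (b + c) = (s2 * r1 + s1 * r2) * a"
  proof -
    have "(s1 * s2) * (b + c) = s2 * (s1 * b) + s1 * (s2 * c)" by (simp add: algebra_simps)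
    also have "\<dots> = (s2 * r1 + s1 * r2) * a" using a(4) b(4) by (simp add: algebra_simps)
    finally show ?thesis .
  qed
  moreover have "s1 * s2 \<notin> P" using prime_notmul[OF P a(1) b(1) a(2) b(2)] .
  ultimately show ?thesis using a b by (intro dvI[of "s1 * s2" _ "s2 * r1 + s1 * r2"]) auto
qed

lemma dv_mul: assumes "r \<in> R" "dv P a b" shows "dv P a (r * b)"
proof -
  obtain s1 r1 where a: "s1 \<in> R" "s1 \<notin> P" "r1 \<in> R" "s1 * b = r1 * a" using assms(2) by (rule dvE)
  have "s1 * (r * b) = (r * r1) * a" using a(4) by (metis mult.assoc mult.left_commute)
  then show ?thesis using a assms(1) by (intro dvI[of s1 _ "r * r1"]) auto
qed

lemma dv_mulc: assumes "dv P a b" shows "dv P (c * a) (c * b)"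
proof -
  obtain s1 r1 where a: "s1 \<in> R" "s1 \<notin> P" "r1 \<in> R" "s1 * b = r1 * a" using assms by (rule dvE)
  have "s1 * (c * b) = r1 * (c * a)" using a(4) by (metis mult.assoc mult.left_commute)
  then show ?thesis using a by (intro dvI[of s1 _ r1]) auto
qed

lemma dv_pow: assumes P: "prime_ideal R P" and d: "dv P a b" shows "dv P (a ^ k) (b ^ k)"
proof (induction k)
  case 0 then show ?case using dv_refl[OF P] by simp
next
  case (Suc k)
  obtain s1 r1 where a: "s1 \<in> R" "s1 \<notin> P" "r1 \<in> R" "s1 * b = r1 * a" using d by (rule dvE)
  obtain s2 r2 where b: "s2 \<in> R" "s2 \<notin> P" "r2 \<in> R" "s2 * b ^ k = r2 * a ^ k" using Suc by (rule dvE)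
  have "(s1 * s2) * b ^ Suc k = (r1 * r2) * a ^ Suc k"
  proof -
    have "(s1 * s2) * b ^ Suc k = (s1 * b) * (s2 * b ^ k)" by (simp add: ac_simps)
    also have "\<dots> = (r1 * r2) * a ^ Suc k" using a(4) b(4) by (simp add: ac_simps)
    finally show ?thesis .
  qed
  moreover have "s1 * s2 \<notin> P" using prime_notmul[OF P a(1) b(1) a(2) b(2)] .
  ultimately show ?case using a b by (intro dvI[of "s1 * s2" _ "r1 * r2"]) auto
qed

lemma dv_mono: assumes "P \<subseteq> M" "dv M a b" shows "dv P a b"
  using assms unfolding dv_def by blast

lemma dv_base: "prime_ideal R P \<Longrightarrow> r \<in> R \<Longrightarrow> dv P a (r * a)"
  using dv_mul dv_refl by blast

lemma dv_ideal: assumes "rideal R I" "dv P g y" "g \<in> I" shows "\<exists>s\<in>R. s \<notin> P \<and> s * y \<in> I"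
proof -
  obtain s1 r1 where a: "s1 \<in> R" "s1 \<notin> P" "r1 \<in> R" "s1 * y = r1 * g" using assms(2) by (rule dvE)
  have "r1 * g \<in> I" using ideal_mul[OF assms(1) a(3) assms(3)] .
  then show ?thesis using a by auto
qed

lemma dv_mod: assumes P: "prime_ideal R P" shows "rsubmodule R {x. dv P a x}"
  unfolding rsubmodule_def using dv_0[OF P] dv_add[OF P] dv_mul by auto

lemma dv_span: "prime_ideal R P \<Longrightarrow> (\<forall>g\<in>G. dv P a g) \<Longrightarrow> x \<in> rspan R G \<Longrightarrow> dv P a x"
  using span_sub[OF dv_mod, of P G a] by blast

lemma common_s:
  assumes P: "prime_ideal R P" and G: "finite G" and ex: "\<forall>g\<in>G. \<exists>s\<in>R. s \<notin> P \<and> \<Phi> s g"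
    and up: "\<And>s t g. \<Phi> s g \<Longrightarrow> t \<in> R \<Longrightarrow> \<Phi> (t * s) g"
  shows "\<exists>s\<in>R. s \<notin> P \<and> (\<forall>g\<in>G. \<Phi> s g)"
  using G ex
proof (induction G rule: finite_induct)
  case empty then show ?case using prime_1[OF P] by auto
next
  case (insert g G)
  obtain s0 where s0: "s0 \<in> R" "s0 \<notin> P" "\<forall>h\<in>G. \<Phi> s0 h" using insert by auto
  obtain s1 where s1: "s1 \<in> R" "s1 \<notin> P" "\<Phi> s1 g" using insert by auto
  have "\<forall>h\<in>insert g G. \<Phi> (s1 * s0) h"
  proof
    fix h assume "h \<in> insert g G"
    then show "\<Phi> (s1 * s0) h"
    proof
      assume "h = g" then show ?thesis using up[OF s1(3) s0(1)] by (simp add: mult.commute)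
    next
      assume "h \<in> G" then show ?thesis using up[of s0 h s1] s0 s1 by simp
    qed
  qed
  moreover have "s1 * s0 \<notin> P" using prime_notmul[OF P s1(1) s0(1) s1(2) s0(2)] .
  ultimately show ?case using s0 s1 by blast
qed

lemma common_n:
  assumes G: "finite G" and ex: "\<forall>g\<in>G. \<exists>n::nat. \<Phi> n g" and up: "\<And>n m g. \<Phi> n g \<Longrightarrow> n \<le> m \<Longrightarrow> \<Phi> m g"
  shows "\<exists>N. \<forall>g\<in>G. \<Phi> N g"
  using G ex
proof (induction G rule: finite_induct)
  case empty then show ?case by auto
next
  case (insert g G)
  obtain n0 where n0: "\<forall>h\<in>G. \<Phi> n0 h" using insert by auto
  obtain n1 where n1: "\<Phi> n1 g" using insert by auto
  have "\<forall>h\<in>insert g G. \<Phi> (n0 + n1) h" using n0 n1 up by (metis insert_iff le_add1 le_add2)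
  then show ?case by blast
qed

lemma inloc_R: "prime_ideal R P \<Longrightarrow> x \<in> R \<Longrightarrow> inloc P x"
  using prime_1 by (intro inlocI[of 1]) auto

lemma inloc_mul: assumes P: "prime_ideal R P" and "inloc P x" "inloc P y" shows "inloc P (x * y)"
proof -
  obtain s where s: "s \<in> R" "s \<notin> P" "s * x \<in> R" using assms(2) by (rule inlocE)
  obtain t where t: "t \<in> R" "t \<notin> P" "t * y \<in> R" using assms(3) by (rule inlocE)
  have e: "(s * t) * (x * y) = (s * x) * (t * y)" by (simp add: ac_simps)
  have "(s * t) * (x * y) \<in> R" unfolding e by (rule Rmul[OF s(3) t(3)])
  then show ?thesis using prime_notmul[OF P s(1) t(1) s(2) t(2)] s t by (intro inlocI[of "s * t"]) auto
qed

lemma inloc_mono: "P \<subseteq> M \<Longrightarrow> inloc M x \<Longrightarrow> inloc P x"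
  unfolding inloc_def by blast

end

locale pvmd = dom0 R for R :: "'k::field set" +
  assumes qf: "has_quotient_field R" and ne: "R \<noteq> UNIV" and pv: "PvMD R"
begin

lemma val_tmax: assumes M: "t_maximal R M" and ab: "a \<in> R" "b \<in> R" shows "dv M a b \<or> dv M b a"
proof -
  have P: "prime_ideal R M" using tmax_prime[OF M] .
  have z: "s \<notin> M \<Longrightarrow> s \<noteq> 0" for s using prime_0[OF P] by auto
  show ?thesis
  proof (cases "a = 0 \<or> b = 0")
    case True then show ?thesis using dv_0[OF P] by auto
  next
    case False
    then have x0: "b / a \<noteq> 0" by simp
    have V: "valuation_domain (localization R M)" using pv M unfolding PvMD_def by blast
    then have "b / a \<in> localization R M \<or> inverse (b / a) \<in> localization R M"
      unfolding valuation_domain_def using x0 by blast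
    then show ?thesis
    proof
      assume "b / a \<in> localization R M"
      then obtain c s where cs: "c \<in> R" "s \<in> R" "s \<notin> M" "b / a = c / s" unfolding localization_def by blast
      then have "s * b = c * a" using False z[OF cs(3)] by (simp add: field_simps)
      then show ?thesis using cs by (intro disjI1 dvI[of s _ c]) auto
    next
      assume "inverse (b / a) \<in> localization R M"
      then obtain c s where cs: "c \<in> R" "s \<in> R" "s \<notin> M" "a / b = c / s" unfolding localization_def by auto
      then have "s * a = c * b" using False z[OF cs(3)] by (simp add: field_simps)
      then show ?thesis using cs by (intro disjI2 dvI[of s _ c]) auto
    qed
  qed
qed

definition good :: "'k set \<Rightarrow> bool" where
  "good P \<longleftrightarrow> prime_ideal R P \<and> (\<exists>M. t_maximal R M \<and> P \<subseteq> M)"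

lemma tmax_good: "t_maximal R M \<Longrightarrow> good M"
  unfolding good_def using tmax_prime by blast

lemma good_prime: "good P \<Longrightarrow> prime_ideal R P"
  unfolding good_def by blast

lemma val_good: assumes "good P" "a \<in> R" "b \<in> R" shows "dv P a b \<or> dv P b a"
proof -
  obtain M where "t_maximal R M" "P \<subseteq> M" using assms(1) unfolding good_def by blast
  then show ?thesis using val_tmax[OF _ assms(2,3)] dv_mono by blast
qed

lemma loc_val: assumes P: "good P" and x: "x \<noteq> 0" shows "inloc P x \<or> inloc P (inverse x)"
proof -
  obtain a b where ab: "a \<in> R" "b \<in> R" "b \<noteq> 0" "x = a / b" using qf unfolding has_quotient_field_def by blast
  have a0: "a \<noteq> 0" using ab x by auto
  have Pp: "prime_ideal R P" using good_prime[OF P] .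
  have z: "s \<notin> P \<Longrightarrow> s \<noteq> 0" for s using prime_0[OF Pp] by auto
  from val_good[OF P ab(1,2)] show ?thesis
  proof
    assume "dv P a b"
    then obtain s r where sr: "s \<in> R" "s \<notin> P" "r \<in> R" "s * b = r * a" by (rule dvE)
    have "inverse x = b / a" using ab(4) by simp
    then have "s * inverse x = (s * b) / a" by simp
    also have "\<dots> = r" using sr(4) a0 by simp
    finally have "s * inverse x = r" .
    then show ?thesis using sr by (intro disjI2 inlocI[of s]) auto
  next
    assume "dv P b a"
    then obtain s r where sr: "s \<in> R" "s \<notin> P" "r \<in> R" "s * a = r * b" by (rule dvE)
    have "s * x = (s * a) / b" using ab(4) by simp
    also have "\<dots> = r" using sr(4) ab(3) by simp
    finally have "s * x = r" .
    then show ?thesis using sr by (intro disjI1 inlocI[of s]) auto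
  qed
qed

lemma pr_div: assumes P: "prime_ideal R P" and M: "t_maximal R M" "P \<subseteq> M" and p: "p \<in> P" and s: "s \<in> R" "s \<notin> P"
  shows "inloc M (p / s)"
proof -
  have pR: "p \<in> R" using prime_R[OF P p] .
  have s0: "s \<noteq> 0" using s prime_0[OF P] by auto
  from val_tmax[OF M(1) s(1) pR] show ?thesis
  proof
    assume "dv M s p"
    then obtain t r where tr: "t \<in> R" "t \<notin> M" "r \<in> R" "t * p = r * s" by (rule dvE)
    then have "t * (p / s) = r" using s0 by (simp add: field_simps)
    then show ?thesis using tr by (intro inlocI[of t]) auto
  next
    assume "dv M p s"
    then obtain t r where tr: "t \<in> R" "t \<notin> M" "r \<in> R" "t * s = r * p" by (rule dvE)
    have "r * p \<in> P" using ideal_mul[OF primeD(1)[OF P] tr(3) p] .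
    moreover have "t \<notin> P" using tr(2) M(2) by blast
    ultimately show ?thesis using prime_notmul[OF P tr(1) s(1) _ s(2)] tr(4) by simp
  qed
qed

lemma val_min: assumes P: "good P" and G: "finite G" "G \<noteq> {}" "G \<subseteq> R" shows "\<exists>g\<in>G. \<forall>h\<in>G. dv P g h"
  using G
proof (induction G rule: finite_ne_induct)
  case (singleton x) then show ?case using dv_refl[OF good_prime[OF P]] by auto
next
  case (insert x F)
  obtain g where g: "g \<in> F" "\<forall>h\<in>F. dv P g h" using insert by auto
  have gx: "g \<in> R" "x \<in> R" using insert g by auto
  from val_good[OF P gx] show ?case
  proof
    assume "dv P g x" then show ?thesis using g by auto
  next
    assume "dv P x g" then show ?thesis using g dv_trans[OF good_prime[OF P]] dv_refl[OF good_prime[OF P]] by auto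
  qed
qed

lemma vop_dv: assumes M: "t_maximal R M" and G: "finite G" "G \<subseteq> R" "rspan R G \<noteq> {0}"
  and y: "y \<in> vop R (rspan R G)" shows "\<exists>g\<in>G. g \<noteq> 0 \<and> dv M g y"
proof -
  have P: "prime_ideal R M" using tmax_prime[OF M] .
  have Gne: "G \<noteq> {}" using G(3) span_empty by auto
  obtain g where g: "g \<in> G" "\<forall>h\<in>G. dv M g h" using val_min[OF tmax_good[OF M] G(1) Gne G(2)] by blast
  have g0: "g \<noteq> 0"
  proof
    assume "g = 0"
    have "h = 0" if hG: "h \<in> G" for h
    proof -
      have "dv M g h" using g(2) hG by blast
      then obtain s r where sr: "s \<in> R" "s \<notin> M" "r \<in> R" "s * h = r * g" by (rule dvE)
      have "s \<noteq> 0" using sr prime_0[OF P] by auto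
      then show ?thesis using sr(4) \<open>g = 0\<close> by simp
    qed
    then show False using span_nz[OF G(3)] by blast
  qed
  obtain s where s: "s \<in> R" "s \<notin> M" "\<forall>h\<in>G. \<exists>r\<in>R. s * h = r * g"
    using common_s[OF P G(1), of "\<lambda>s h. \<exists>r\<in>R. s * h = r * g"] g(2)
    by (auto simp: dv_def) (metis Rmul mult.assoc)
  have "s / g \<in> colon R G"
  proof (rule colonI)
    fix h assume "h \<in> G"
    then obtain r where "r \<in> R" "s * h = r * g" using s by blast
    then show "s / g * h \<in> R" using g0 by (simp add: field_simps)
  qed
  then have "s / g \<in> colon R (rspan R G)" using colon_span by simp
  then have "y * (s / g) \<in> R" using y unfolding vop_def colon_def by blast
  then have "s * y = (y * (s / g)) * g" using g0 by (simp add: field_simps)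
  then show ?thesis using g g0 s \<open>y * (s / g) \<in> R\<close> by (intro bexI[of _ g] conjI dvI[of s _ "y * (s / g)"]) auto
qed

lemma top_t_loc: assumes M: "t_maximal R M" and I: "rideal R I" and y: "y \<in> top_t R I"
  shows "\<exists>s\<in>R. s \<notin> M \<and> s * y \<in> I"
proof -
  obtain J where J: "J \<subseteq> I" "J \<noteq> {0}" "fin_gen R J" "y \<in> vop R J" using y unfolding mem_top_t by blast
  obtain G where G: "finite G" "J = rspan R G" using J fg_D by blast
  have GI: "G \<subseteq> I" using span_incl[of G] G(2) J(1) by simp
  then have GR: "G \<subseteq> R" using ideal_R[OF I] by simp
  obtain g where g: "g \<in> G" "dv M g y" using vop_dv[OF M G(1) GR] J G by auto
  show ?thesis using dv_ideal[OF I g(2)] g(1) GI by blast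
qed

end

context dom0 begin

lemma colon_ideal: assumes A: "rsubmodule R A" shows "rideal R {d \<in> R. d * x \<in> A}"
  unfolding rideal_def rsubmodule_def
proof (intro conjI ballI)
  show "0 \<in> {d \<in> R. d * x \<in> A}" using mod_0[OF A] by simp
next
  fix a b assume "a \<in> {d \<in> R. d * x \<in> A}" "b \<in> {d \<in> R. d * x \<in> A}"
  then have "a \<in> R" "b \<in> R" "a * x \<in> A" "b * x \<in> A" by auto
  then show "a + b \<in> {d \<in> R. d * x \<in> A}" using mod_add[OF A] Radd by (simp add: distrib_right)
next
  fix r a assume "r \<in> R" "a \<in> {d \<in> R. d * x \<in> A}"
  then have "r \<in> R" "a \<in> R" "a * x \<in> A" by auto
  then show "r * a \<in> {d \<in> R. d * x \<in> A}" using mod_smul[OF A] Rmul by (simp add: mult.assoc)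
qed auto

lemma common_n2:
  assumes G: "finite G" and ex: "\<forall>g\<in>G. \<exists>n::nat. \<Phi> n g" and up: "\<And>n m g. g \<in> G \<Longrightarrow> \<Phi> n g \<Longrightarrow> n \<le> m \<Longrightarrow> \<Phi> m g"
  shows "\<exists>N. \<forall>g\<in>G. \<Phi> N g"
proof -
  have "\<forall>H. H \<subseteq> G \<longrightarrow> (\<exists>N. \<forall>g\<in>H. \<Phi> N g)"
  proof (intro allI impI)
    fix H assume "H \<subseteq> G"
    have "finite H" using G \<open>H \<subseteq> G\<close> finite_subset by blast
    then show "\<exists>N. \<forall>g\<in>H. \<Phi> N g" using \<open>H \<subseteq> G\<close>
    proof (induction H rule: finite_induct)
      case empty then show ?case by auto
    next
      case (insert g H)
      obtain n0 where n0: "\<forall>h\<in>H. \<Phi> n0 h" using insert by auto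
      obtain n1 where n1: "\<Phi> n1 g" using insert ex by auto
      have "\<forall>h\<in>insert g H. \<Phi> (n0 + n1) h"
      proof
        fix h assume h: "h \<in> insert g H"
        then have hG: "h \<in> G" using insert by blast
        from h show "\<Phi> (n0 + n1) h"
        proof
          assume "h = g" then show ?thesis using up[OF hG _ le_add2] n1 by simp
        next
          assume "h \<in> H" then show ?thesis using up[OF hG _ le_add1] n0 by blast
        qed
      qed
      then show ?case by blast
    qed
  qed
  then show ?thesis by blast
qed

end

context pvmd begin

lemma one_top: assumes G: "rideal R G" "G \<noteq> {0}" and n: "\<forall>M. t_maximal R M \<longrightarrow> \<not> G \<subseteq> M"
  shows "1 \<in> top_t R G"
proof -
  have T: "t_ideal R (top_t R G)" using t_ideal_top[OF G] .
  have "top_t R G = R"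
  proof (rule ccontr)
    assume "top_t R G \<noteq> R"
    then obtain M where "t_maximal R M" "top_t R G \<subseteq> M" using exists_tmax[OF T] by blast
    then show False using n top_t_incl[OF G] by blast
  qed
  then show ?thesis by simp
qed

lemma inter_loc: assumes a: "\<forall>M. t_maximal R M \<longrightarrow> inloc M x" shows "x \<in> R"
proof -
  obtain a b where ab: "a \<in> R" "b \<in> R" "b \<noteq> 0" "x = a / b" using qf unfolding has_quotient_field_def by blast
  define D where "D = {d \<in> R. d * x \<in> R}"
  have D: "rideal R D" unfolding D_def using colon_ideal[OF R_mod] .
  have "b * x = a" using ab by simp
  then have "b \<in> D" unfolding D_def using ab by simp
  then have Dn: "D \<noteq> {0}" using ab by blast
  have "\<forall>M. t_maximal R M \<longrightarrow> \<not> D \<subseteq> M"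
  proof (intro allI impI)
    fix M assume "t_maximal R M"
    then obtain s where "s \<in> R" "s \<notin> M" "s * x \<in> R" using a by (meson inlocE)
    then show "\<not> D \<subseteq> M" unfolding D_def by blast
  qed
  then have "1 \<in> top_t R D" using one_top[OF D Dn] by blast
  then obtain J where J: "J \<subseteq> D" "1 \<in> vop R J" unfolding mem_top_t by blast
  have "x \<in> colon R J"
  proof (rule colonI)
    fix j assume "j \<in> J" then have "j * x \<in> R" using J unfolding D_def by blast
    then show "x * j \<in> R" by (simp add: mult.commute)
  qed
  then have "1 * x \<in> R" using colonD[OF J(2)[unfolded vop_def]] by blast
  then show ?thesis by simp
qed

lemma tideal_loc: assumes I: "t_ideal R I" and x: "x \<in> R" and a: "\<forall>M. t_maximal R M \<longrightarrow> (\<exists>s\<in>R. s \<notin> M \<and> s * x \<in> I)"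
  shows "x \<in> I"
proof (cases "x = 0")
  case True then show ?thesis using ideal_0[OF t_idealD(1)[OF I]] by simp
next
  case False
  have Ii: "rideal R I" "I \<noteq> {0}" using t_idealD[OF I] by auto
  define D where "D = {d \<in> R. d * x \<in> I}"
  have D: "rideal R D" unfolding D_def using colon_ideal[OF ideal_mod[OF Ii(1)]] .
  obtain i where i: "i \<in> I" "i \<noteq> 0" using Ii ideal_0 by blast
  have "i * x \<in> I" using ideal_mul2[OF Ii(1) x i(1)] .
  then have "i \<in> D" unfolding D_def using ideal_in_R[OF Ii(1) i(1)] by simp
  then have Dn: "D \<noteq> {0}" using i by blast
  have "\<forall>M. t_maximal R M \<longrightarrow> \<not> D \<subseteq> M"
  proof (intro allI impI)
    fix M assume "t_maximal R M"
    then obtain s where "s \<in> R" "s \<notin> M" "s * x \<in> I" using a by blast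
    then show "\<not> D \<subseteq> M" unfolding D_def by blast
  qed
  then have "1 \<in> top_t R D" using one_top[OF D Dn] by blast
  then obtain J where J: "J \<subseteq> D" "J \<noteq> {0}" "fin_gen R J" "1 \<in> vop R J" unfolding mem_top_t by blast
  obtain G where G: "finite G" "J = rspan R G" using J fg_D by blast
  have xs: "x * 1 \<in> vop R (rspan R ((*) x ` G))" using vop_scale[of 1 G x] J(4) G(2) by simp
  have GD: "G \<subseteq> D" using span_incl[of G] G(2) J(1) by simp
  have xG: "(*) x ` G \<subseteq> I"
  proof
    fix y assume "y \<in> (*) x ` G"
    then obtain g where "g \<in> G" "y = x * g" by blast
    then show "y \<in> I" using GD unfolding D_def by (auto simp: mult.commute)
  qed
  obtain g where g: "g \<in> G" "g \<noteq> 0" using span_nz[of G] J(2) G(2) by auto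
  have "x * g \<in> (*) x ` G" "x * g \<noteq> 0" using g False by auto
  then have "vop R (rspan R ((*) x ` G)) \<subseteq> I" using t_ideal_vop2[OF I _ xG] G(1) by blast
  then show ?thesis using xs by auto
qed

lemma prime_t: assumes P: "prime_ideal R P" "P \<noteq> {0}" and M: "t_maximal R M" "P \<subseteq> M"
  shows "t_ideal R P" "t_prime R P"
proof -
  have Pi: "rideal R P" using primeD(1)[OF P(1)] .
  have "top_t R P \<subseteq> P"
  proof
    fix y assume y: "y \<in> top_t R P"
    obtain s where s: "s \<in> R" "s \<notin> M" "s * y \<in> P" using top_t_loc[OF M(1) Pi y] by blast
    have "y \<in> R" using top_t_R[OF ideal_R[OF Pi]] y by blast
    then show "y \<in> P" using primeD(3)[OF P(1) s(1) _ s(3)] s(2) M(2) by blast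
  qed
  then show "t_ideal R P" unfolding t_ideal_def using Pi P(2) top_t_incl[OF Pi P(2)] by simp
  then show "t_prime R P" unfolding t_prime_def using P(1) by simp
qed

lemma primes_chain: assumes M: "t_maximal R M" and P: "prime_ideal R P1" "prime_ideal R P2" "P1 \<subseteq> M" "P2 \<subseteq> M"
  shows "P1 \<subseteq> P2 \<or> P2 \<subseteq> P1"
proof (rule ccontr)
  assume "\<not> ?thesis"
  then obtain a b where ab: "a \<in> P1" "a \<notin> P2" "b \<in> P2" "b \<notin> P1" by blast
  have aR: "a \<in> R" "b \<in> R" using ab prime_R P by auto
  from val_tmax[OF M aR] show False
  proof
    assume "dv M a b"
    then obtain s r where sr: "s \<in> R" "s \<notin> M" "r \<in> R" "s * b = r * a" by (rule dvE)
    have "r * a \<in> P1" using ideal_mul[OF primeD(1)[OF P(1)] sr(3) ab(1)] .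
    then show False using primeD(3)[OF P(1) sr(1) aR(2)] sr ab P(3) by auto
  next
    assume "dv M b a"
    then obtain s r where sr: "s \<in> R" "s \<notin> M" "r \<in> R" "s * a = r * b" by (rule dvE)
    have "r * b \<in> P2" using ideal_mul[OF primeD(1)[OF P(2)] sr(3) ab(3)] .
    then show False using primeD(3)[OF P(2) sr(1) aR(1)] sr ab P(4) by auto
  qed
qed

definition rp :: "'k set \<Rightarrow> 'k \<Rightarrow> 'k set" where
  "rp M y = {x \<in> R. \<exists>k. dv M y (x ^ k)}"

lemma rp_prime: assumes M: "t_maximal R M" and y: "y \<in> M"
  shows "prime_ideal R (rp M y)" "rp M y \<subseteq> M" "y \<in> rp M y"
    "\<And>Q. prime_ideal R Q \<Longrightarrow> Q \<subseteq> M \<Longrightarrow> y \<in> Q \<Longrightarrow> rp M y \<subseteq> Q"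
proof -
  have P: "prime_ideal R M" using tmax_prime[OF M] .
  have yR: "y \<in> R" using prime_R[OF P y] .
  have id: "rideal R (rp M y)" unfolding rideal_def rsubmodule_def
  proof (intro conjI ballI)
    show "0 \<in> rp M y" unfolding rp_def using dv_0[OF P, of y] by (auto intro!: exI[of _ 1])
  next
    fix a b assume "a \<in> rp M y" "b \<in> rp M y"
    then obtain k l where ab: "a \<in> R" "b \<in> R" "dv M y (a ^ k)" "dv M y (b ^ l)" unfolding rp_def by blast
    from val_tmax[OF M ab(1,2)] have "dv M y ((a + b) ^ k) \<or> dv M y ((a + b) ^ l)"
    proof
      assume "dv M a b"
      then have "dv M a (a + b)" using dv_add[OF P dv_refl[OF P]] by blast
      then have "dv M (a ^ k) ((a + b) ^ k)" using dv_pow[OF P] by blast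
      then show ?thesis using dv_trans[OF P ab(3)] by blast
    next
      assume "dv M b a"
      then have "dv M b (a + b)" using dv_add[OF P _ dv_refl[OF P]] by blast
      then have "dv M (b ^ l) ((a + b) ^ l)" using dv_pow[OF P] by blast
      then show ?thesis using dv_trans[OF P ab(4)] by blast
    qed
    then show "a + b \<in> rp M y" unfolding rp_def using ab by blast
  next
    fix r a assume "r \<in> R" "a \<in> rp M y"
    then obtain k where a: "a \<in> R" "dv M y (a ^ k)" unfolding rp_def by blast
    have "dv M y (r ^ k * a ^ k)" using dv_mul[OF Rpow[OF \<open>r \<in> R\<close>] a(2)] .
    then show "r * a \<in> rp M y" unfolding rp_def using a \<open>r \<in> R\<close> by (auto simp: power_mult_distrib)
  next
    show "rp M y \<subseteq> R" unfolding rp_def by blast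
  qed
  show sub: "rp M y \<subseteq> M"
  proof
    fix x assume "x \<in> rp M y"
    then obtain k where x: "x \<in> R" "dv M y (x ^ k)" unfolding rp_def by blast
    then obtain s r where sr: "s \<in> R" "s \<notin> M" "r \<in> R" "s * x ^ k = r * y" by (meson dvE)
    have "r * y \<in> M" using ideal_mul[OF primeD(1)[OF P] sr(3) y] .
    then have "x ^ k \<in> M" using primeD(3)[OF P sr(1) Rpow[OF x(1)]] sr by auto
    then show "x \<in> M" using prime_pow[OF P x(1)] by blast
  qed
  show yy: "y \<in> rp M y" unfolding rp_def using yR dv_refl[OF P, of y] by (auto intro!: exI[of _ 1])
  show "prime_ideal R (rp M y)" unfolding prime_ideal_def
  proof (intro conjI ballI impI)
    show "rideal R (rp M y)" using id .
    show "rp M y \<noteq> R"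
    proof
      assume "rp M y = R"
      then have "1 \<in> rp M y" by simp
      then show False using sub prime_1[OF P] by blast
    qed
  next
    fix a b assume ab: "a \<in> R" "b \<in> R" "a * b \<in> rp M y"
    then obtain k where k: "dv M y ((a * b) ^ k)" unfolding rp_def by blast
    from val_tmax[OF M ab(1,2)] show "a \<in> rp M y \<or> b \<in> rp M y"
    proof
      assume "dv M a b"
      then have "dv M (b * a) (b * b)" by (rule dv_mulc)
      then have "dv M ((a * b) ^ k) ((b * b) ^ k)" using dv_pow[OF P] by (simp add: mult.commute)
      then have "dv M y ((b * b) ^ k)" using dv_trans[OF P k] by blast
      then have "dv M y (b ^ (2 * k))" by (simp add: power_mult power2_eq_square)
      then show ?thesis unfolding rp_def using ab by blast
    next
      assume "dv M b a"
      then have "dv M (a * b) (a * a)" by (rule dv_mulc)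
      then have "dv M ((a * b) ^ k) ((a * a) ^ k)" using dv_pow[OF P] by blast
      then have "dv M y ((a * a) ^ k)" using dv_trans[OF P k] by blast
      then have "dv M y (a ^ (2 * k))" by (simp add: power_mult power2_eq_square)
      then show ?thesis unfolding rp_def using ab by blast
    qed
  qed
  fix Q assume Q: "prime_ideal R Q" "Q \<subseteq> M" "y \<in> Q"
  show "rp M y \<subseteq> Q"
  proof
    fix x assume "x \<in> rp M y"
    then obtain k where x: "x \<in> R" "dv M y (x ^ k)" unfolding rp_def by blast
    then obtain s r where sr: "s \<in> R" "s \<notin> M" "r \<in> R" "s * x ^ k = r * y" by (meson dvE)
    have "r * y \<in> Q" using ideal_mul[OF primeD(1)[OF Q(1)] sr(3) Q(3)] .
    then have "s * x ^ k \<in> Q" using sr(4) by simp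
    moreover have "s \<notin> Q" using sr(2) Q(2) by blast
    ultimately have "x ^ k \<in> Q" using primeD(3)[OF Q(1) sr(1) Rpow[OF x(1)]] by blast
    then show "x \<in> Q" using prime_pow[OF Q(1) x(1)] by blast
  qed
qed

lemma vop_principal: assumes z: "z \<in> R" "z \<noteq> 0" shows "vop R (rspan R {z}) = rspan R {z}"
proof
  show "rspan R {z} \<subseteq> vop R (rspan R {z})" using vop_incl .
  show "vop R (rspan R {z}) \<subseteq> rspan R {z}"
  proof
    fix y assume y: "y \<in> vop R (rspan R {z})"
    have "1 / z \<in> colon R (rspan R {z})" unfolding colon_span
      by (rule colonI) (use z in simp)
    then have "y * (1 / z) \<in> R" using colonD[OF y[unfolded vop_def]] by blast
    moreover have "y = (y * (1 / z)) * z" using z by simp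
    ultimately show "y \<in> rspan R {z}" unfolding span_single by blast
  qed
qed

lemma principal_t: assumes z: "z \<in> R" "z \<noteq> 0" shows "t_ideal R (rspan R {z})"
proof -
  have i: "rideal R (rspan R {z})" using span_ideal z by simp
  have n: "rspan R {z} \<noteq> {0}" using span_nz2[of z "{z}"] z by simp
  have "top_t R (rspan R {z}) \<subseteq> rspan R {z}"
  proof
    fix y assume "y \<in> top_t R (rspan R {z})"
    then obtain J where "J \<subseteq> rspan R {z}" "y \<in> vop R J" unfolding mem_top_t by blast
    then show "y \<in> rspan R {z}" using vop_mono vop_principal[OF z] by blast
  qed
  then show ?thesis unfolding t_ideal_def using i n top_t_incl[OF i n] by simp
qed

lemma minprime_t: assumes mp: "minimal_prime R I P" and I: "t_ideal R I" shows "t_prime R P"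
proof -
  have P: "prime_ideal R P" "I \<subseteq> P" using minimal_primeD[OF mp] by auto
  have Ii: "rideal R I" "I \<noteq> {0}" using t_idealD[OF I] by auto
  have Pi: "rideal R P" using primeD(1)[OF P(1)] .
  have Pn: "P \<noteq> {0}" using nz_sub[OF P(2) Ii(2) ideal_0[OF Ii(1)]] .
  have "top_t R P \<subseteq> P"
  proof
    fix y assume y: "y \<in> top_t R P"
    have yR: "y \<in> R" using top_t_R[OF ideal_R[OF Pi]] y by blast
    obtain J where J: "J \<subseteq> P" "J \<noteq> {0}" "fin_gen R J" "y \<in> vop R J" using y unfolding mem_top_t by blast
    obtain G where G: "finite G" "J = rspan R G" using J fg_D by blast
    have GP: "G \<subseteq> P" using span_incl[of G] G(2) J(1) by simp
    have GR: "G \<subseteq> R" using GP prime_R[OF P(1)] by blast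
    have ex: "\<forall>g\<in>G. \<exists>s\<in>R. s \<notin> P \<and> (\<exists>k. s * g ^ k \<in> I)" using minprime_pow[OF mp Ii(1)] GP by blast
    have up: "\<exists>k. (t * s) * g ^ k \<in> I" if h1: "\<exists>k. s * g ^ k \<in> I" and h2: "t \<in> R" for s t g
    proof -
      obtain k where "s * g ^ k \<in> I" using h1 by blast
      then have "t * (s * g ^ k) \<in> I" using ideal_mul[OF Ii(1) h2] by blast
      then show ?thesis by (auto simp: mult.assoc)
    qed
    obtain s where s: "s \<in> R" "s \<notin> P" "\<forall>g\<in>G. \<exists>k. s * g ^ k \<in> I"
      using common_s[OF P(1) G(1) ex up] by blast
    have upn: "s * g ^ m \<in> I" if h1: "s * g ^ n \<in> I" and h2: "n \<le> m" and h3: "g \<in> G" for n m g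
    proof -
      have gR: "g \<in> R" using GR h3 by blast
      have "g ^ m = g ^ (m - n) * g ^ n" using h2 by (simp add: power_add[symmetric])
      then have e: "s * g ^ m = g ^ (m - n) * (s * g ^ n)" by (simp add: ac_simps)
      show ?thesis unfolding e using ideal_mul[OF Ii(1) Rpow[OF gR] h1] .
    qed
    obtain K where K: "\<forall>g\<in>G. s * g ^ K \<in> I"
      using common_n2[OF G(1) s(3)] upn by blast
    have "s * y ^ K \<in> I"
    proof (rule tideal_loc[OF I])
      show "s * y ^ K \<in> R" using s(1) yR by auto
      show "\<forall>M. t_maximal R M \<longrightarrow> (\<exists>t\<in>R. t \<notin> M \<and> t * (s * y ^ K) \<in> I)"
      proof (intro allI impI)
        fix M assume M: "t_maximal R M"
        obtain g where g: "g \<in> G" "dv M g y" using vop_dv[OF M G(1) GR] J G by auto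
        obtain t r where tr: "t \<in> R" "t \<notin> M" "r \<in> R" "t * y = r * g" using g(2) by (rule dvE)
        have e: "t ^ K * (s * y ^ K) = r ^ K * (s * g ^ K)"
        proof -
          have "t ^ K * (s * y ^ K) = s * (t * y) ^ K" by (simp add: power_mult_distrib ac_simps)
          also have "\<dots> = r ^ K * (s * g ^ K)" using tr(4) by (simp add: power_mult_distrib ac_simps)
          finally show ?thesis .
        qed
        have "r ^ K * (s * g ^ K) \<in> I" using ideal_mul[OF Ii(1) Rpow[OF tr(3)]] K g(1) by blast
        then have "t ^ K * (s * y ^ K) \<in> I" unfolding e .
        moreover have "t ^ K \<notin> M" using prime_powN[OF tmax_prime[OF M] tr(1,2)] .
        moreover have "t ^ K \<in> R" using tr(1) by blast
        ultimately show "\<exists>t\<in>R. t \<notin> M \<and> t * (s * y ^ K) \<in> I" by blast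
      qed
    qed
    then have "s * y ^ K \<in> P" using P(2) by blast
    then have "y ^ K \<in> P" using primeD(3)[OF P(1) s(1) Rpow[OF yR]] s(2) by blast
    then show "y \<in> P" using prime_pow[OF P(1) yR] by blast
  qed
  then have "t_ideal R P" unfolding t_ideal_def using Pi Pn top_t_incl[OF Pi Pn] by simp
  then show ?thesis unfolding t_prime_def using P(1) by simp
qed

lemma ue: assumes P: "prime_ideal R P" and y: "y \<in> P" and d: "dv P z (y ^ k)" and M: "t_maximal R M" "P \<subseteq> M"
  shows "dv M z (y ^ Suc k)"
proof -
  obtain s r where sr: "s \<in> R" "s \<notin> P" "r \<in> R" "s * y ^ k = r * z" using d by (rule dvE)
  obtain u where u: "u \<in> R" "u \<notin> M" "u * (y / s) \<in> R" using pr_div[OF P M y sr(1,2)] by (rule inlocE)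
  have s0: "s \<noteq> 0" using sr prime_0[OF P] by auto
  have "u * y ^ Suc k = (u * (y / s) * r) * z"
  proof -
    have "u * y ^ Suc k = (u * (y / s)) * (s * y ^ k)" using s0 by (simp add: field_simps)
    also have "\<dots> = (u * (y / s) * r) * z" using sr(4) by (simp add: ac_simps)
    finally show ?thesis .
  qed
  moreover have "u * (y / s) * r \<in> R" using Rmul[OF u(3) sr(3)] .
  ultimately show ?thesis using u(1,2) by (intro dvI[of u _ "u * (y / s) * r"])
qed

end

context pvmd begin

lemma radI: "x \<in> R \<Longrightarrow> x ^ n \<in> X \<Longrightarrow> x \<in> rad R X"
  unfolding rad_def by blast

lemma radE: assumes "x \<in> rad R X" obtains n where "x \<in> R" "x ^ n \<in> X"
  using assms unfolding rad_def by blast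

lemma branched_of: assumes P: "prime_ideal R P" and z: "z \<in> P" "z \<noteq> 0" and h: "\<forall>x\<in>P. \<exists>k. dv P z (x ^ k)"
  shows "branched R P"
proof -
  define Q where "Q = {x \<in> R. dv P (z * z) x}"
  have zR: "z \<in> R" using prime_R[OF P z(1)] .
  have zz: "z * z \<in> P" using ideal_mul[OF primeD(1)[OF P] zR z(1)] .
  have Qi: "rideal R Q" unfolding rideal_def rsubmodule_def Q_def
    using dv_0[OF P] dv_add[OF P] dv_mul by auto
  have QP: "Q \<subseteq> P"
  proof
    fix x assume "x \<in> Q"
    then have x: "x \<in> R" "dv P (z * z) x" unfolding Q_def by auto
    then obtain s r where sr: "s \<in> R" "s \<notin> P" "r \<in> R" "s * x = r * (z * z)" by (meson dvE)
    have "r * (z * z) \<in> P" using ideal_mul[OF primeD(1)[OF P] sr(3) zz] .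
    then show "x \<in> P" using primeD(3)[OF P sr(1) x(1)] sr by auto
  qed
  have QR: "Q \<noteq> R" using QP primeD(2)[OF P] prime_R[OF P] by blast
  have rQ: "rad R Q = P"
  proof
    show "rad R Q \<subseteq> P"
    proof
      fix x assume "x \<in> rad R Q"
      then obtain n where "x \<in> R" "x ^ n \<in> Q" by (rule radE)
      then show "x \<in> P" using QP prime_pow[OF P] by blast
    qed
    show "P \<subseteq> rad R Q"
    proof
      fix x assume x: "x \<in> P"
      then obtain k where "dv P z (x ^ k)" using h by blast
      then have "dv P (z ^ 2) ((x ^ k) ^ 2)" using dv_pow[OF P] by blast
      then have "dv P (z * z) (x ^ (k * 2))" by (simp add: power2_eq_square power_mult)
      moreover have "x \<in> R" using prime_R[OF P x] .
      ultimately show "x \<in> rad R Q" unfolding Q_def by (intro radI[of x "k * 2"]) auto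
    qed
  qed
  have prim: "primary_ideal R Q" unfolding primary_ideal_def
  proof (intro conjI ballI impI)
    show "rideal R Q" using Qi .
    show "Q \<noteq> R" using QR .
  next
    fix a b assume ab: "a \<in> R" "b \<in> R" "a * b \<in> Q"
    show "a \<in> Q \<or> b \<in> rad R Q"
    proof (cases "b \<in> P")
      case True show ?thesis by (rule disjI2, subst rQ, rule True)
    next
      case False
      have "dv P (z * z) (a * b)" using ab(3) unfolding Q_def by blast
      then obtain s r where sr: "s \<in> R" "s \<notin> P" "r \<in> R" "s * (a * b) = r * (z * z)" by (rule dvE)
      have "(s * b) * a = r * (z * z)" using sr(4) by (simp add: ac_simps)
      moreover have "s * b \<notin> P" using prime_notmul[OF P sr(1) ab(2) sr(2) False] .
      ultimately have "dv P (z * z) a" using sr ab by (intro dvI[of "s * b" _ r]) auto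
      then show ?thesis unfolding Q_def using ab by simp
    qed
  qed
  have "z \<notin> Q"
  proof
    assume "z \<in> Q"
    then have "dv P (z * z) z" unfolding Q_def by blast
    then obtain s r where sr: "s \<in> R" "s \<notin> P" "r \<in> R" "s * z = r * (z * z)" by (rule dvE)
    then have "s = r * z" using z(2) by (simp add: algebra_simps)
    then show False using ideal_mul[OF primeD(1)[OF P] sr(3) z(1)] sr(2) by simp
  qed
  then have "Q \<noteq> P" using z by blast
  then show ?thesis unfolding branched_def using P prim rQ by blast
qed

lemma G2J: assumes P: "prime_ideal R P" and g: "\<not> inloc P g"
  and out: "\<forall>M. t_maximal R M \<and> \<not> P \<subseteq> M \<longrightarrow> inloc M g"
  shows "\<exists>J. rideal R J \<and> fin_gen R J \<and> J \<subseteq> P \<and> (\<forall>M. t_maximal R M \<and> \<not> P \<subseteq> M \<longrightarrow> \<not> J \<subseteq> M)"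
proof -
  have g0: "g \<noteq> 0" using g inloc_R[OF P R0] by auto
  define D where "D = {d \<in> R. d * g \<in> R}"
  have Di: "rideal R D" unfolding D_def using colon_ideal[OF R_mod] .
  have DP: "D \<subseteq> P"
  proof
    fix d assume "d \<in> D"
    then have "d \<in> R" "d * g \<in> R" unfolding D_def by auto
    then show "d \<in> P" using g inlocI[of d P g] by blast
  qed
  define E where "E = {d + g * d' | d d'. d \<in> D \<and> d' \<in> D}"
  have Em: "d + g * d' \<in> E" if "d \<in> D" "d' \<in> D" for d d' unfolding E_def using that by blast
  have Ei: "rideal R E" unfolding rideal_def rsubmodule_def
  proof (intro conjI ballI)
    show "0 \<in> E" using Em[OF ideal_0[OF Di] ideal_0[OF Di]] by simp
  next
    fix a b assume "a \<in> E" "b \<in> E"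
    then obtain d1 e1 d2 e2 where "d1 \<in> D" "e1 \<in> D" "d2 \<in> D" "e2 \<in> D" "a = d1 + g * e1" "b = d2 + g * e2"
      unfolding E_def by blast
    moreover then have "a + b = (d1 + d2) + g * (e1 + e2)" by (simp add: algebra_simps)
    ultimately show "a + b \<in> E" using Em ideal_add[OF Di] by metis
  next
    fix r a assume r: "r \<in> R" and "a \<in> E"
    then obtain d1 e1 where "d1 \<in> D" "e1 \<in> D" "a = d1 + g * e1" unfolding E_def by blast
    moreover then have "r * a = (r * d1) + g * (r * e1)" by (simp add: algebra_simps)
    ultimately show "r * a \<in> E" using Em ideal_mul[OF Di r] by metis
  next
    show "E \<subseteq> R"
    proof
      fix a assume "a \<in> E"
      then obtain d1 e1 where "d1 \<in> D" "e1 \<in> D" "a = d1 + g * e1" unfolding E_def by blast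
      moreover then have "d1 \<in> R" "g * e1 \<in> R" unfolding D_def by (auto simp: mult.commute)
      ultimately show "a \<in> R" by auto
    qed
  qed
  obtain a b where ab: "a \<in> R" "b \<in> R" "b \<noteq> 0" "g = a / b" using qf unfolding has_quotient_field_def by blast
  have "b \<in> D" unfolding D_def using ab by simp
  then have "b + g * 0 \<in> E" using Em ideal_0[OF Di] by blast
  then have En: "E \<noteq> {0}" using ab by auto
  have "\<forall>M. t_maximal R M \<longrightarrow> \<not> E \<subseteq> M"
  proof (intro allI impI)
    fix M assume M: "t_maximal R M"
    from loc_val[OF tmax_good[OF M] g0] show "\<not> E \<subseteq> M"
    proof
      assume "inloc M g"
      then obtain s where s: "s \<in> R" "s \<notin> M" "s * g \<in> R" by (rule inlocE)
      then have "s \<in> D" unfolding D_def by simp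
      then have "s + g * 0 \<in> E" using Em ideal_0[OF Di] by blast
      then show ?thesis using s by auto
    next
      assume "inloc M (inverse g)"
      then obtain s where s: "s \<in> R" "s \<notin> M" "s * inverse g \<in> R" by (rule inlocE)
      have e: "(s * inverse g) * g = s" using g0 by simp
      have "s * inverse g \<in> D" unfolding D_def using s(3) s(1) by (simp only: e mem_Collect_eq)
      then have h: "0 + g * (s * inverse g) \<in> E" using Em ideal_0[OF Di] by blast
      have e2: "0 + g * (s * inverse g) = s" using g0 by simp
      have "s \<in> E" using h unfolding e2 .
      then show ?thesis using s(2) by blast
    qed
  qed
  then have "1 \<in> top_t R E" using one_top[OF Ei En] by blast
  then obtain H where H: "H \<subseteq> E" "H \<noteq> {0}" "fin_gen R H" "1 \<in> vop R H" unfolding mem_top_t by blast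
  obtain G0 where G0: "finite G0" "H = rspan R G0" using H fg_D by blast
  have G0E: "G0 \<subseteq> E" using span_incl[of G0] G0(2) H(1) by simp
  have "\<forall>h\<in>G0. \<exists>d d'. d \<in> D \<and> d' \<in> D \<and> h = d + g * d'" using G0E unfolding E_def by blast
  then obtain f1 f2 where f: "\<forall>h\<in>G0. f1 h \<in> D \<and> f2 h \<in> D \<and> h = f1 h + g * f2 h" by metis
  define J where "J = rspan R (f1 ` G0 \<union> f2 ` G0)"
  have gen: "f1 ` G0 \<union> f2 ` G0 \<subseteq> D" using f by blast
  have JD: "J \<subseteq> D" unfolding J_def using span_in_ideal[OF Di gen] .
  have "f1 ` G0 \<union> f2 ` G0 \<subseteq> R" using gen ideal_R[OF Di] by (rule subset_trans)
  then have Ji: "rideal R J" unfolding J_def by (rule span_ideal)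
  have "finite (f1 ` G0 \<union> f2 ` G0)" using G0(1) by simp
  then have Jf: "fin_gen R J" unfolding J_def fin_gen_def by blast
  have "\<not> J \<subseteq> M" if M: "t_maximal R M" "\<not> P \<subseteq> M" for M
  proof
    assume JM: "J \<subseteq> M"
    have Mp: "prime_ideal R M" using tmax_prime[OF M(1)] .
    have ig: "inloc M g" using out[rule_format, OF conjI[OF M(1) M(2)]] .
    obtain t where t: "t \<in> R" "t \<notin> M" "t * g \<in> R" using inlocE[OF ig] by blast
    have "G0 \<subseteq> M"
    proof
      fix h assume h: "h \<in> G0"
      have "f1 h \<in> f1 ` G0 \<union> f2 ` G0" "f2 h \<in> f1 ` G0 \<union> f2 ` G0" using h by auto
      then have f1M: "f1 h \<in> M" "f2 h \<in> M" using JM span_incl[of "f1 ` G0 \<union> f2 ` G0"] unfolding J_def by auto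
      have eh: "h = f1 h + g * f2 h" using f h by blast
      have "t * h = t * (f1 h + g * f2 h)" using eh by (rule arg_cong[where f="(*) t"])
      also have "\<dots> = t * f1 h + (t * g) * f2 h" by (simp add: algebra_simps)
      finally have "t * h = t * f1 h + (t * g) * f2 h" .
      moreover have "t * f1 h \<in> M" using ideal_mul[OF primeD(1)[OF Mp] t(1) f1M(1)] .
      moreover have "(t * g) * f2 h \<in> M" using ideal_mul[OF primeD(1)[OF Mp] t(3) f1M(2)] .
      ultimately have "t * h \<in> M" using ideal_add[OF primeD(1)[OF Mp]] by simp
      moreover have "h \<in> R" using h G0E ideal_R[OF Ei] by blast
      ultimately show "h \<in> M" using primeD(3)[OF Mp t(1)] t(2) by blast
    qed
    then have "H \<subseteq> M" using G0(2) span_in_ideal[OF primeD(1)[OF Mp]] by simp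
    then have "vop R H \<subseteq> M" using t_ideal_vop[OF _ _ H(2) H(3)] M(1) unfolding t_maximal_def by blast
    then show False using H(4) prime_1[OF Mp] by blast
  qed
  then show ?thesis using Ji Jf JD DP by blast
qed

lemma c3_c2: assumes P: "t_prime R P" and J: "rideal R J" "fin_gen R J" "J \<noteq> {0}" "P = rad R (vop R J)"
  shows "J \<subseteq> P" "\<forall>M. t_maximal R M \<and> \<not> P \<subseteq> M \<longrightarrow> \<not> J \<subseteq> M"
proof -
  show "J \<subseteq> P"
  proof
    fix x assume x: "x \<in> J"
    then have "x ^ 1 \<in> vop R J" using vop_incl by auto
    then show "x \<in> P" unfolding J(4) using radI ideal_in_R[OF J(1) x] by blast
  qed
  show "\<forall>M. t_maximal R M \<and> \<not> P \<subseteq> M \<longrightarrow> \<not> J \<subseteq> M"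
  proof (intro allI impI)
    fix M assume M: "t_maximal R M \<and> \<not> P \<subseteq> M"
    show "\<not> J \<subseteq> M"
    proof
      assume "J \<subseteq> M"
      then have "vop R J \<subseteq> M" using t_ideal_vop[OF _ _ J(3) J(2)] M unfolding t_maximal_def by blast
      have "P \<subseteq> M"
      proof
        fix x assume "x \<in> P"
        then obtain n where x: "x \<in> R" "x ^ n \<in> vop R J" unfolding J(4) by (rule radE)
        then have "x ^ n \<in> M" using \<open>vop R J \<subseteq> M\<close> by blast
        then show "x \<in> M" using prime_pow[OF tmax_prime x(1)] M by blast
      qed
      then show False using M by blast
    qed
  qed
qed

lemma tprime_good: assumes "t_prime R P" shows "good P"
proof -
  have P: "prime_ideal R P" "t_ideal R P" using assms unfolding t_prime_def by auto
  obtain M where "t_maximal R M" "P \<subseteq> M" using exists_tmax[OF P(2) primeD(2)[OF P(1)]] by blast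
  then show ?thesis unfolding good_def using P by blast
qed

lemma c2_c3: assumes P: "t_prime R P" "branched R P"
  and J: "rideal R J" "fin_gen R J" "J \<subseteq> P" "\<forall>M. t_maximal R M \<and> \<not> P \<subseteq> M \<longrightarrow> \<not> J \<subseteq> M"
  shows "\<exists>F. rideal R F \<and> fin_gen R F \<and> F \<noteq> {0} \<and> P = rad R (vop R F)"
proof -
  have Pp: "prime_ideal R P" "t_ideal R P" using P unfolding t_prime_def by auto
  obtain Q where Q: "primary_ideal R Q" "rad R Q = P" "Q \<noteq> P" using P(2) unfolding branched_def by blast
  have Qi: "rideal R Q" using Q unfolding primary_ideal_def by blast
  have QP: "Q \<subseteq> P" using Q(2) radI ideal_in_R[OF Qi] by (metis power_one_right subsetI)
  obtain z where z: "z \<in> P" "z \<notin> Q" using QP Q(3) by blast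
  have zR: "z \<in> R" using prime_R[OF Pp(1) z(1)] .
  have z0: "z \<noteq> 0" using z ideal_0[OF Qi] by auto
  obtain G where G: "finite G" "J = rspan R G" using J fg_D by blast
  have GP: "G \<subseteq> P" using span_incl[of G] G(2) J(3) by simp
  define F where "F = rspan R (G \<union> {z})"
  have gen: "G \<union> {z} \<subseteq> P" using GP z by blast
  have FP: "F \<subseteq> P" unfolding F_def using span_in_ideal[OF primeD(1)[OF Pp(1)] gen] .
  have "G \<union> {z} \<subseteq> R" using gen prime_R[OF Pp(1)] by blast
  then have Fi: "rideal R F" unfolding F_def by (rule span_ideal)
  have "finite (G \<union> {z})" using G(1) by simp
  then have Ff: "fin_gen R F" unfolding F_def fin_gen_def by blast
  have Fn: "F \<noteq> {0}" unfolding F_def using span_nz2[of z "G \<union> {z}"] z0 by simp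
  have Pg: "good P" using tprime_good[OF P(1)] .
  have "rad R (vop R F) = P"
  proof
    show "rad R (vop R F) \<subseteq> P"
    proof
      fix x assume "x \<in> rad R (vop R F)"
      then obtain n where x: "x \<in> R" "x ^ n \<in> vop R F" by (rule radE)
      have "vop R F \<subseteq> P" using t_ideal_vop[OF Pp(2) FP Fn Ff] .
      then show "x \<in> P" using x prime_pow[OF Pp(1)] by blast
    qed
    show "P \<subseteq> rad R (vop R F)"
    proof
      fix y assume y: "y \<in> P"
      have yR: "y \<in> R" using prime_R[OF Pp(1) y] .
      have "y \<in> rad R Q" using y Q(2) by simp
      then obtain k where k: "y ^ k \<in> Q" by (rule radE)
      have "dv P z (y ^ k)"
      proof -
        from val_good[OF Pg zR Rpow[OF yR]] show ?thesis
        proof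
          assume "dv P (y ^ k) z"
          then obtain s r where sr: "s \<in> R" "s \<notin> P" "r \<in> R" "s * z = r * y ^ k" by (rule dvE)
          have "r * y ^ k \<in> Q" using ideal_mul[OF Qi sr(3) k] .
          then have "z * s \<in> Q" using sr(4) by (simp add: mult.commute)
          then have "z \<in> Q \<or> s \<in> rad R Q" using Q(1) zR sr(1) unfolding primary_ideal_def by blast
          then show ?thesis using z(2) sr(2) Q(2) by blast
        qed
      qed
      have "y ^ Suc k \<in> vop R F" unfolding mem_vop
      proof (intro allI impI)
        fix w assume w: "\<forall>b\<in>F. w * b \<in> R"
        have "\<forall>M. t_maximal R M \<longrightarrow> inloc M (y ^ Suc k * w)"
        proof (intro allI impI)
          fix M assume M: "t_maximal R M"
          show "inloc M (y ^ Suc k * w)"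
          proof (cases "P \<subseteq> M")
            case True
            have "dv M z (y ^ Suc k)" using ue[OF Pp(1) y \<open>dv P z (y ^ k)\<close> M True] .
            then obtain t r where tr: "t \<in> R" "t \<notin> M" "r \<in> R" "t * y ^ Suc k = r * z" by (rule dvE)
            have "z \<in> F" using span_incl unfolding F_def by blast
            then have wz: "w * z \<in> R" using w by blast
            have e: "t * (y ^ Suc k * w) = r * (w * z)" using tr(4) by (metis mult.assoc mult.commute)
            have "t * (y ^ Suc k * w) \<in> R" unfolding e using Rmul[OF tr(3) wz] .
            then show ?thesis using tr(1,2) by (rule inlocI[rotated -1])
          next
            case False
            have "\<not> J \<subseteq> M" using J(4)[rule_format, OF conjI[OF M False]] .
            then obtain g where g: "g \<in> G" "g \<notin> M" unfolding G(2)
              using span_in_ideal[OF primeD(1)[OF tmax_prime[OF M]]] by blast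
            have "g \<in> F" using span_incl g(1) unfolding F_def by blast
            then have wg: "w * g \<in> R" using w by blast
            have e: "g * (y ^ Suc k * w) = y ^ Suc k * (w * g)" by (simp add: ac_simps)
            have gR: "g \<in> R" using GP g(1) prime_R[OF Pp(1)] by blast
            have "g * (y ^ Suc k * w) \<in> R" unfolding e using Rmul[OF Rpow[OF yR] wg] .
            then show ?thesis using gR g(2) by (rule inlocI[rotated -1])
          qed
        qed
        then show "y ^ Suc k * w \<in> R" using inter_loc by blast
      qed
      then show "y \<in> rad R (vop R F)" using radI yR by blast
    qed
  qed
  then show ?thesis using Fi Ff Fn by blast
qed

end

context pvmd begin

definition Prd :: "'k set \<Rightarrow> 'k set" where
  "Prd I = {a * b | a b. a \<in> I \<and> b \<in> colon R I}"

lemma iprod_eq: "iprod R I (colon R I) = rspan R (Prd I)"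
  unfolding iprod_def Prd_def by simp

lemma Prd_R: assumes I: "rideal R I" shows "Prd I \<subseteq> R"
proof
  fix x assume "x \<in> Prd I"
  then obtain a b where ab: "a \<in> I" "b \<in> colon R I" "x = a * b" unfolding Prd_def by blast
  have "b * a \<in> R" using colonD[OF ab(2) ab(1)] .
  then show "x \<in> R" using ab(3) by (simp add: mult.commute)
qed

lemma PrdI: "a \<in> I \<Longrightarrow> b \<in> colon R I \<Longrightarrow> a * b \<in> Prd I"
  unfolding Prd_def by blast

lemma A_facts: assumes I: "rideal R I" "I \<noteq> {0}"
  shows "rideal R (rspan R (Prd I))" "I \<subseteq> rspan R (Prd I)" "rspan R (Prd I) \<noteq> {0}"
    "rspan R (Prd I) \<subseteq> R"
proof -
  show Ai: "rideal R (rspan R (Prd I))" using span_ideal[OF Prd_R[OF I(1)]] .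
  show IA: "I \<subseteq> rspan R (Prd I)"
  proof
    fix a assume a: "a \<in> I"
    have "1 \<in> colon R I" using one_colon[OF ideal_R[OF I(1)]] .
    then have "a * 1 \<in> Prd I" using PrdI[OF a] by blast
    then show "a \<in> rspan R (Prd I)" using span_incl by auto
  qed
  show "rspan R (Prd I) \<noteq> {0}" using nz_sub[OF IA I(2) ideal_0[OF I(1)]] .
  show "rspan R (Prd I) \<subseteq> R" using ideal_R[OF Ai] .
qed

lemma span_min: assumes P: "good P" and S: "S \<subseteq> R" and x: "x \<in> rspan R S" "x \<noteq> 0"
  shows "\<exists>w\<in>S. dv P w x"
proof -
  obtain F r where F: "finite F" "F \<subseteq> S" "\<forall>s\<in>F. r s \<in> R" "x = (\<Sum>s\<in>F. r s * s)"
    using x(1) unfolding rspan_def by blast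
  have "F \<noteq> {}" using F(4) x(2) by auto
  then obtain w where w: "w \<in> F" "\<forall>h\<in>F. dv P w h" using val_min[OF P F(1)] F(2) S by blast
  have "x \<in> rspan R F" unfolding rspan_def using F by blast
  then have "dv P w x" using dv_span[OF good_prime[OF P] w(2)] by blast
  then show ?thesis using w(1) F(2) by blast
qed

lemma c1_c2: assumes c1: "tRTP R" and P: "t_prime R P" "branched R P"
  shows "\<exists>J. rideal R J \<and> fin_gen R J \<and> J \<subseteq> P \<and> (\<forall>M. t_maximal R M \<and> \<not> P \<subseteq> M \<longrightarrow> \<not> J \<subseteq> M)"
proof -
  have Pp: "prime_ideal R P" "t_ideal R P" using P unfolding t_prime_def by auto
  obtain Q where Q: "primary_ideal R Q" "rad R Q = P" "Q \<noteq> P" using P(2) unfolding branched_def by blast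
  have Qi: "rideal R Q" using Q unfolding primary_ideal_def by blast
  have Qprim: "\<And>a b. a \<in> R \<Longrightarrow> b \<in> R \<Longrightarrow> a * b \<in> Q \<Longrightarrow> a \<in> Q \<or> b \<in> P"
    using Q(1,2) unfolding primary_ideal_def by blast
  have QP: "Q \<subseteq> P"
  proof
    fix q assume q: "q \<in> Q"
    have "q ^ 1 \<in> Q" using q by simp
    then have "q \<in> rad R Q" using radI ideal_in_R[OF Qi q] by blast
    then show "q \<in> P" using Q(2) by simp
  qed
  have powQ: "\<exists>n. p ^ n \<in> Q" if "p \<in> P" for p
  proof -
    have "p \<in> rad R Q" using that Q(2) by simp
    then obtain n where "p ^ n \<in> Q" by (rule radE)
    then show ?thesis by blast
  qed
  obtain p0 where p0: "p0 \<in> P" "p0 \<noteq> 0" using t_idealD(2)[OF Pp(2)] ideal_0[OF primeD(1)[OF Pp(1)]] by blast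
  obtain n0 where "p0 ^ n0 \<in> Q" using powQ[OF p0(1)] by blast
  moreover have "p0 ^ n0 \<noteq> 0" using p0(2) by simp
  ultimately have Qn: "Q \<noteq> {0}" by blast
  define A where "A = rspan R (Prd Q)"
  have Af: "rideal R A" "Q \<subseteq> A" "A \<noteq> {0}" "A \<subseteq> R" unfolding A_def using A_facts[OF Qi Qn] by auto
  define T where "T = top_t R A"
  have QT: "Q \<subseteq> T" unfolding T_def using Af(2) top_t_incl[OF Af(1) Af(3)] by (rule subset_trans)
  have "top_t R (iprod R Q (colon R Q)) = R \<or> rad R (top_t R (iprod R Q (colon R Q))) = top_t R (iprod R Q (colon R Q))"
    using c1 Qi Qn unfolding tRTP_def by blast
  then have TT: "T = R \<or> rad R T = T" unfolding T_def A_def iprod_eq .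
  have PT: "P \<subseteq> T"
  proof
    fix p assume p: "p \<in> P"
    have pR: "p \<in> R" using prime_R[OF Pp(1) p] .
    obtain n where "p ^ n \<in> Q" using powQ[OF p] by blast
    then have pn: "p ^ n \<in> T" using QT by blast
    from TT show "p \<in> T"
    proof
      assume "T = R" then show ?thesis using pR by simp
    next
      assume "rad R T = T"
      have "p \<in> rad R T" using radI[OF pR pn] .
      then show ?thesis using \<open>rad R T = T\<close> by simp
    qed
  qed
  obtain M0 where M0: "t_maximal R M0" "P \<subseteq> M0" using exists_tmax[OF Pp(2) primeD(2)[OF Pp(1)]] by blast
  have "\<exists>g\<in>colon R Q. \<not> inloc P g"
  proof (rule ccontr)
    assume "\<not> ?thesis"
    then have all: "\<forall>g\<in>colon R Q. inloc P g" by blast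
    define LQ where "LQ = {x. \<exists>s\<in>R. s \<notin> P \<and> s * x \<in> Q}"
    have LQm: "rsubmodule R LQ" unfolding rsubmodule_def
    proof (intro conjI ballI)
      show "0 \<in> LQ" unfolding LQ_def using prime_1[OF Pp(1)] ideal_0[OF Qi] by (auto intro!: bexI[of _ 1])
    next
      fix x y assume "x \<in> LQ" "y \<in> LQ"
      then obtain s1 s2 where s: "s1 \<in> R" "s1 \<notin> P" "s1 * x \<in> Q" "s2 \<in> R" "s2 \<notin> P" "s2 * y \<in> Q"
        unfolding LQ_def by blast
      have e: "(s1 * s2) * (x + y) = s2 * (s1 * x) + s1 * (s2 * y)" by (simp add: algebra_simps)
      have "(s1 * s2) * (x + y) \<in> Q" unfolding e using ideal_add[OF Qi ideal_mul[OF Qi s(4) s(3)] ideal_mul[OF Qi s(1) s(6)]] .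
      moreover have "s1 * s2 \<notin> P" using prime_notmul[OF Pp(1) s(1) s(4) s(2) s(5)] .
      moreover have "s1 * s2 \<in> R" using s by blast
      ultimately show "x + y \<in> LQ" unfolding LQ_def by blast
    next
      fix r x assume r: "r \<in> R" and "x \<in> LQ"
      then obtain s where s: "s \<in> R" "s \<notin> P" "s * x \<in> Q" unfolding LQ_def by blast
      have e: "s * (r * x) = r * (s * x)" by (simp add: ac_simps)
      have "s * (r * x) \<in> Q" unfolding e using ideal_mul[OF Qi r s(3)] .
      then show "r * x \<in> LQ" unfolding LQ_def using s by blast
    qed
    have "Prd Q \<subseteq> LQ"
    proof
      fix w assume "w \<in> Prd Q"
      then obtain a g where ag: "a \<in> Q" "g \<in> colon R Q" "w = a * g" unfolding Prd_def by blast
      obtain s where s: "s \<in> R" "s \<notin> P" "s * g \<in> R" using all ag(2) by (meson inlocE)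
      have e: "s * w = (s * g) * a" using ag(3) by (simp add: ac_simps)
      have "s * w \<in> Q" unfolding e using ideal_mul[OF Qi s(3) ag(1)] .
      then show "w \<in> LQ" unfolding LQ_def using s by blast
    qed
    then have ALQ: "A \<subseteq> LQ" unfolding A_def using span_sub[OF LQm] by blast
    have "P \<subseteq> Q"
    proof
      fix p assume p: "p \<in> P"
      have pR: "p \<in> R" using prime_R[OF Pp(1) p] .
      have "p \<in> T" using PT p by blast
      then obtain s where s: "s \<in> R" "s \<notin> M0" "s * p \<in> A" using top_t_loc[OF M0(1) Af(1)] unfolding T_def by blast
      then have "s * p \<in> LQ" using ALQ by blast
      then obtain t where t: "t \<in> R" "t \<notin> P" "t * (s * p) \<in> Q" unfolding LQ_def by blast
      have sP: "s \<notin> P" using s(2) M0(2) by blast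
      have "p * (t * s) \<in> Q" using t(3) by (simp add: ac_simps)
      then have "p \<in> Q \<or> t * s \<in> P" using Qprim[OF pR Rmul[OF t(1) s(1)]] by blast
      then show "p \<in> Q" using prime_notmul[OF Pp(1) t(1) s(1) t(2) sP] by blast
    qed
    then show False using QP Q(3) by blast
  qed
  then obtain g where g: "g \<in> colon R Q" "\<not> inloc P g" by blast
  have out: "\<forall>M. t_maximal R M \<and> \<not> P \<subseteq> M \<longrightarrow> inloc M g"
  proof (intro allI impI)
    fix M assume M: "t_maximal R M \<and> \<not> P \<subseteq> M"
    have Mp: "prime_ideal R M" using tmax_prime M by blast
    have "\<not> Q \<subseteq> M"
    proof
      assume QM: "Q \<subseteq> M"
      have "P \<subseteq> M"
      proof
        fix p assume p: "p \<in> P"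
        obtain n where "p ^ n \<in> Q" using powQ[OF p] by blast
        then show "p \<in> M" using QM prime_pow[OF Mp prime_R[OF Pp(1) p]] by blast
      qed
      then show False using M by blast
    qed
    then obtain q where q: "q \<in> Q" "q \<notin> M" by blast
    have "g * q \<in> R" using colonD[OF g(1) q(1)] .
    then have "q * g \<in> R" by (simp add: mult.commute)
    then show "inloc M g" using q ideal_in_R[OF Qi q(1)] by (intro inlocI[of q]) auto
  qed
  show ?thesis using G2J[OF Pp(1) g(2) out] .
qed

end

context pvmd begin

definition C2 :: bool where
  "C2 \<longleftrightarrow> (\<forall>P. t_prime R P \<and> branched R P \<longrightarrow>
               (\<exists>J. rideal R J \<and> fin_gen R J \<and> J \<subseteq> P \<and>
                    (\<forall>M. t_maximal R M \<and> \<not> P \<subseteq> M \<longrightarrow> \<not> J \<subseteq> M)))"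

lemma key:
  assumes c2: C2 and I: "rideal R I" "I \<noteq> {0}" and M: "t_maximal R M"
    and y: "y \<in> R" "y ^ n \<in> top_t R (rspan R (Prd I))"
    and H: "\<not> (\<exists>s\<in>R. s \<notin> M \<and> s * y \<in> rspan R (Prd I))"
  shows False
proof -
  define A where "A = rspan R (Prd I)"
  have Af: "rideal R A" "I \<subseteq> A" "A \<noteq> {0}" "A \<subseteq> R" unfolding A_def using A_facts[OF I] by auto
  have H': "\<And>s. s \<in> R \<Longrightarrow> s \<notin> M \<Longrightarrow> s * y \<in> A \<Longrightarrow> False" using H unfolding A_def by blast
  have Mp: "prime_ideal R M" using tmax_prime[OF M] .
  have y0: "y \<noteq> 0"
  proof
    assume "y = 0"
    then have "1 * y \<in> A" using ideal_0[OF Af(1)] by simp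
    then show False using H'[OF R1 prime_1[OF Mp]] by blast
  qed
  obtain s0 where s0: "s0 \<in> R" "s0 \<notin> M" "s0 * y ^ n \<in> A" using top_t_loc[OF M Af(1)] y(2) unfolding A_def by blast
  have yM: "y \<in> M"
  proof (rule ccontr)
    assume "y \<notin> M"
    then have "y ^ n \<notin> M" using prime_powN[OF Mp y(1)] by blast
    then have a: "s0 * y ^ n \<notin> M" using prime_notmul[OF Mp s0(1) Rpow[OF y(1)] s0(2)] by blast
    have "(s0 * y ^ n) * y \<in> A" using ideal_mul2[OF Af(1) y(1) s0(3)] .
    then show False using H'[OF Rmul[OF s0(1) Rpow[OF y(1)]] a] by blast
  qed
  have sy0: "s0 * y ^ n \<noteq> 0" using s0 y0 prime_0[OF Mp] by auto
  obtain w where w: "w \<in> Prd I" "dv M w (s0 * y ^ n)"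
    using span_min[OF tmax_good[OF M] Prd_R[OF I(1)] _ sy0] s0(3) unfolding A_def by blast
  obtain b0 c0 where bc: "b0 \<in> I" "c0 \<in> colon R I" "w = b0 * c0" using w(1) unfolding Prd_def by blast
  define p where "p = b0 * c0"
  obtain u r0 where ur: "u \<in> R" "u \<notin> M" "r0 \<in> R" "u * (s0 * y ^ n) = r0 * p" using w(2) unfolding p_def bc(3) by (rule dvE)
  have dvp: "dv M p (y ^ n)"
  proof -
    have "(u * s0) * y ^ n = r0 * p" using ur(4) by (simp add: ac_simps)
    moreover have "u * s0 \<notin> M" using prime_notmul[OF Mp ur(1) s0(1) ur(2) s0(2)] .
    ultimately show ?thesis using ur s0 by (intro dvI[of "u * s0" _ r0]) auto
  qed
  have c00: "c0 \<noteq> 0"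
  proof
    assume "c0 = 0"
    then have "u * (s0 * y ^ n) = 0" using ur(4) unfolding p_def by simp
    then show False using sy0 ur(2) prime_0[OF Mp] by auto
  qed
  define P where "P = rp M y"
  have Pp: "prime_ideal R P" "P \<subseteq> M" "y \<in> P" using rp_prime[OF M yM] unfolding P_def by auto
  have Pn: "P \<noteq> {0}" using Pp(3) y0 by blast
  have Pt: "t_prime R P" using prime_t(2)[OF Pp(1) Pn M Pp(2)] .
  have Pg: "good P" unfolding good_def using Pp M by blast
  have Prp: "\<exists>k. dv M y (x ^ k)" if "x \<in> P" for x using that unfolding P_def rp_def by blast
  have "\<forall>x\<in>P. \<exists>k. dv P y (x ^ k)" using Prp dv_mono[OF Pp(2)] by blast
  then have Pb: "branched R P" using branched_of[OF Pp(1) Pp(3) y0] by blast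
  obtain J where J: "rideal R J" "fin_gen R J" "J \<subseteq> P" "\<forall>M'. t_maximal R M' \<and> \<not> P \<subseteq> M' \<longrightarrow> \<not> J \<subseteq> M'"
    using c2 Pt Pb unfolding C2_def by blast
  obtain G where G: "finite G" "J = rspan R G" using J fg_D by blast
  have GP: "G \<subseteq> P" using span_incl[of G] G(2) J(3) by simp
  define Bp where "Bp b \<longleftrightarrow> (\<forall>b'\<in>I. \<exists>s\<in>R. s \<notin> P \<and> (\<exists>p'\<in>P. s * (y * b') = p' * b))" for b
  have "\<exists>b\<in>I. Bp b"
  proof (rule ccontr)
    assume NB: "\<not> (\<exists>b\<in>I. Bp b)"
    have step1: "\<exists>b'\<in>I. dv P (y * b') b" if b: "b \<in> I" for b
    proof -
      obtain b' where b': "b' \<in> I" "\<not> (\<exists>s\<in>R. s \<notin> P \<and> (\<exists>p'\<in>P. s * (y * b') = p' * b))"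
        using NB b unfolding Bp_def by blast
      have bR: "b \<in> R" "y * b' \<in> R" using b b' ideal_in_R[OF I(1)] y(1) by auto
      from val_good[OF Pg bR(2) bR(1)] have "dv P (y * b') b"
      proof
        assume "dv P b (y * b')"
        then obtain s r where sr: "s \<in> R" "s \<notin> P" "r \<in> R" "s * (y * b') = r * b" by (rule dvE)
        have "r \<notin> P" using b'(2) sr by blast
        then show ?thesis using sr by (intro dvI[of r _ s]) auto
      qed
      then show ?thesis using b' by blast
    qed
    have stepk: "\<forall>b\<in>I. \<exists>b'\<in>I. dv P (y ^ k * b') b" for k
    proof (induction k)
      case 0 then show ?case using dv_refl[OF Pp(1)] by auto
    next
      case (Suc k)
      show ?case
      proof
        fix b assume b: "b \<in> I"
        obtain b1 where b1: "b1 \<in> I" "dv P (y ^ k * b1) b" using Suc b by blast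
        obtain b2 where b2: "b2 \<in> I" "dv P (y * b2) b1" using step1[OF b1(1)] by blast
        have "dv P (y ^ k * (y * b2)) (y ^ k * b1)" using dv_mulc[OF b2(2)] .
        then have "dv P (y ^ k * (y * b2)) b" using dv_trans[OF Pp(1) _ b1(2)] by blast
        then show "\<exists>b'\<in>I. dv P (y ^ Suc k * b') b" using b2(1) by (auto simp: ac_simps)
      qed
    qed
    obtain b' where b': "b' \<in> I" "dv P (y ^ Suc n * b') b0" using stepk bc(1) by blast
    have "dv P (c0 * (y ^ Suc n * b')) (c0 * b0)" using dv_mulc[OF b'(2)] .
    moreover have "dv P p (y ^ n)" using dv_mono[OF Pp(2) dvp] .
    ultimately have "dv P (c0 * (y ^ Suc n * b')) (y ^ n)" using dv_trans[OF Pp(1)] unfolding p_def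
      by (metis mult.commute)
    then obtain s r where sr: "s \<in> R" "s \<notin> P" "r \<in> R" "s * y ^ n = r * (c0 * (y ^ Suc n * b'))" by (rule dvE)
    have e: "y ^ n * s = y ^ n * (r * y * (c0 * b'))" using sr(4) by (simp add: ac_simps)
    have "s = r * y * (c0 * b')" using e y0 by simp
    moreover have "c0 * b' \<in> R" using colonD[OF bc(2) b'(1)] .
    moreover have "r * y \<in> P" using ideal_mul[OF primeD(1)[OF Pp(1)] sr(3) Pp(3)] .
    ultimately have "s \<in> P" using ideal_mul2[OF primeD(1)[OF Pp(1)]] by simp
    then show False using sr(2) by blast
  qed
  then obtain b where b: "b \<in> I" "Bp b" by blast
  have bR: "b \<in> R" using ideal_in_R[OF I(1) b(1)] .
  have b00: "b \<noteq> 0"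
  proof
    assume "b = 0"
    have "I \<subseteq> {0}"
    proof
      fix b' assume b': "b' \<in> I"
      obtain s p' where sp: "s \<in> R" "s \<notin> P" "p' \<in> P" "s * (y * b') = p' * b" using b(2) b' unfolding Bp_def by blast
      have "s \<noteq> 0" using sp prime_0[OF Pp(1)] by auto
      then show "b' \<in> {0}" using sp(4) \<open>b = 0\<close> y0 by simp
    qed
    then show False using I(2) ideal_0[OF I(1)] by blast
  qed
  define b1 where "b1 = c0 * b"
  have b1R: "b1 \<in> R" unfolding b1_def using colonD[OF bc(2) b(1)] .
  have b10: "b1 \<noteq> 0" unfolding b1_def using c00 b00 by simp
  have dvb1: "dv M b1 (y ^ Suc n)"
  proof -
    obtain s p' where sp: "s \<in> R" "s \<notin> P" "p' \<in> P" "s * (y * b0) = p' * b" using b(2) bc(1) unfolding Bp_def by blast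
    have s0': "s \<noteq> 0" using sp prime_0[OF Pp(1)] by auto
    obtain v where v: "v \<in> R" "v \<notin> M" "v * (p' / s) \<in> R" using pr_div[OF Pp(1) M Pp(2) sp(3) sp(1,2)] by (rule inlocE)
    obtain u' r' where ur': "u' \<in> R" "u' \<notin> M" "r' \<in> R" "u' * y ^ n = r' * p" using dvp by (rule dvE)
    have "(v * u') * y ^ Suc n = (r' * (v * (p' / s))) * b1"
    proof -
      have "(v * u') * y ^ Suc n = v * y * (u' * y ^ n)" by (simp add: ac_simps)
      also have "\<dots> = v * r' * c0 * (y * b0)" using ur'(4) unfolding p_def by (simp add: ac_simps)
      also have "\<dots> = v * r' * c0 * (p' * b / s)" using sp(4) s0' by (simp add: field_simps)
      also have "\<dots> = (r' * (v * (p' / s))) * b1" unfolding b1_def by (simp add: field_simps)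
      finally show ?thesis .
    qed
    moreover have "v * u' \<notin> M" using prime_notmul[OF Mp v(1) ur'(1) v(2) ur'(2)] .
    moreover have "r' * (v * (p' / s)) \<in> R" using Rmul[OF ur'(3) v(3)] .
    ultimately show ?thesis using v ur' by (intro dvI[of "v * u'" _ "r' * (v * (p' / s))"]) auto
  qed
  have exd: "\<forall>g\<in>G. \<exists>d\<in>R. d \<notin> M \<and> (\<exists>e. \<exists>r\<in>R. d * g ^ e = r * b1)"
  proof
    fix g assume g: "g \<in> G"
    obtain k where k: "dv M y (g ^ k)" using Prp GP g by blast
    have "dv M (y ^ Suc n) ((g ^ k) ^ Suc n)" using dv_pow[OF Mp k] .
    then have "dv M b1 ((g ^ k) ^ Suc n)" using dv_trans[OF Mp dvb1] by blast
    then obtain d r where dr: "d \<in> R" "d \<notin> M" "r \<in> R" "d * (g ^ k) ^ Suc n = r * b1" by (rule dvE)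
    then have "d * g ^ (k * Suc n) = r * b1" by (simp only: power_mult)
    then show "\<exists>d\<in>R. d \<notin> M \<and> (\<exists>e. \<exists>r\<in>R. d * g ^ e = r * b1)" using dr by blast
  qed
  have upd: "\<exists>e. \<exists>r\<in>R. (t * d) * g ^ e = r * b1" if h1: "\<exists>e. \<exists>r\<in>R. d * g ^ e = r * b1" and h2: "t \<in> R" for d t g
  proof -
    obtain e r where er: "r \<in> R" "d * g ^ e = r * b1" using h1 by blast
    have "(t * d) * g ^ e = (t * r) * b1" using er(2) by (simp add: ac_simps)
    then show ?thesis using er(1) h2 by blast
  qed
  obtain d where d: "d \<in> R" "d \<notin> M" "\<forall>g\<in>G. \<exists>e. \<exists>r\<in>R. d * g ^ e = r * b1"
    using common_s[OF Mp G(1) exd upd] by blast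
  define x where "x = y * d * c0 / b1"
  have xcol: "x \<in> colon R I"
  proof (rule colonI)
    fix b' assume b': "b' \<in> I"
    have cb': "c0 * b' \<in> R" using colonD[OF bc(2) b'] .
    have "\<forall>M''. t_maximal R M'' \<longrightarrow> inloc M'' (x * b')"
    proof (intro allI impI)
      fix M'' assume M'': "t_maximal R M''"
      show "inloc M'' (x * b')"
      proof (cases "P \<subseteq> M''")
        case True
        obtain s p' where sp: "s \<in> R" "s \<notin> P" "p' \<in> P" "s * (y * b') = p' * b" using b(2) b' unfolding Bp_def by blast
        have s0': "s \<noteq> 0" using sp prime_0[OF Pp(1)] by auto
        have "x * b' = d * (p' / s)"
        proof -
          have "x * b' = d * (y * b') / b" unfolding x_def b1_def using c00 b00 by (simp add: field_simps)
          also have "\<dots> = d * (p' * b / s) / b" using sp(4) s0' by (simp add: field_simps)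
          also have "\<dots> = d * (p' / s)" using b00 s0' by (simp add: field_simps)
          finally show ?thesis .
        qed
        moreover have "inloc M'' (d * (p' / s))"
          using inloc_mul[OF tmax_prime[OF M''] inloc_R[OF tmax_prime[OF M''] d(1)] pr_div[OF Pp(1) M'' True sp(3) sp(1,2)]] .
        ultimately show ?thesis by simp
      next
        case False
        have "\<not> J \<subseteq> M''" using J(4)[rule_format, OF conjI[OF M'' False]] .
        then obtain g where g: "g \<in> G" "g \<notin> M''" unfolding G(2)
          using span_in_ideal[OF primeD(1)[OF tmax_prime[OF M'']]] by blast
        obtain e r where er: "r \<in> R" "d * g ^ e = r * b1" using d(3) g(1) by blast
        have eq: "g ^ e * (x * b') = y * (c0 * b') * r"
        proof -
          have "g ^ e * (x * b') = y * (c0 * b') * (d * g ^ e) / b1" unfolding x_def by (simp add: field_simps)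
          also have "\<dots> = y * (c0 * b') * r" using er(2) b10 by (simp add: field_simps)
          finally show ?thesis .
        qed
        have "y * (c0 * b') * r \<in> R" using y(1) cb' er(1) by blast
        then have i: "g ^ e * (x * b') \<in> R" unfolding eq .
        have gR: "g \<in> R" using GP g(1) prime_R[OF Pp(1)] by blast
        have "g ^ e \<notin> M''" using prime_powN[OF tmax_prime[OF M''] gR g(2)] .
        then show ?thesis using inlocI[OF Rpow[OF gR] _ i] by blast
      qed
    qed
    then show "x * b' \<in> R" using inter_loc by blast
  qed
  have "b * x \<in> Prd I" using PrdI[OF b(1) xcol] .
  moreover have "b * x = d * y" unfolding x_def b1_def using c00 b00 by (simp add: field_simps)
  ultimately have "d * y \<in> A" unfolding A_def using span_incl by auto
  then show False using H'[OF d(1) d(2)] by blast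
qed

lemma c2_c1: assumes c2: C2 shows "tRTP R"
  unfolding tRTP_def
proof (intro allI impI disjI2)
  fix I assume I: "rideal R I \<and> I \<noteq> {0}"
  then have Ii: "rideal R I" "I \<noteq> {0}" by auto
  define A where "A = rspan R (Prd I)"
  have Af: "rideal R A" "I \<subseteq> A" "A \<noteq> {0}" "A \<subseteq> R" unfolding A_def using A_facts[OF Ii] by auto
  define T where "T = top_t R A"
  have Tt: "t_ideal R T" unfolding T_def using t_ideal_top[OF Af(1) Af(3)] .
  have AT: "A \<subseteq> T" unfolding T_def using top_t_incl[OF Af(1) Af(3)] .
  have TR: "T \<subseteq> R" unfolding T_def using top_t_R[OF Af(4)] .
  have "rad R T = T"
  proof
    show "T \<subseteq> rad R T"
    proof
      fix x assume x: "x \<in> T"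
      have x1: "x ^ 1 \<in> T" using x by simp
      have xR: "x \<in> R" using x TR by blast
      show "x \<in> rad R T" using radI[OF xR x1] .
    qed
    show "rad R T \<subseteq> T"
    proof
      fix y assume "y \<in> rad R T"
      then obtain n where yn: "y \<in> R" "y ^ n \<in> T" by (rule radE)
      show "y \<in> T"
      proof (rule tideal_loc[OF Tt yn(1)], intro allI impI)
        fix M assume M: "t_maximal R M"
        have "\<exists>s\<in>R. s \<notin> M \<and> s * y \<in> A"
        proof (rule ccontr)
          assume "\<not> (\<exists>s\<in>R. s \<notin> M \<and> s * y \<in> A)"
          then show False using key[OF c2 Ii M yn(1), of n] yn(2) unfolding T_def A_def by blast
        qed
        then show "\<exists>s\<in>R. s \<notin> M \<and> s * y \<in> T" using AT by blast
      qed
    qed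
  qed
  then show "rad R (top_t R (iprod R I (colon R I))) = top_t R (iprod R I (colon R I))"
    unfolding iprod_eq T_def A_def .
qed

end

context pvmd begin

lemma Z_facts: assumes z: "z \<in> R" "z \<noteq> 0"
  shows "rideal R (rspan R {z})" "fin_gen R (rspan R {z})" "rspan R {z} \<noteq> {0}" "z \<in> rspan R {z}"
  using span_ideal[of "{z}"] z fin_gen_single span_nz2[of z "{z}"] span_incl[of "{z}"] by auto

lemma Z_sub: "rideal R Q \<Longrightarrow> z \<in> Q \<Longrightarrow> rspan R {z} \<subseteq> Q"
  using span_in_ideal by simp

lemma mp_t: assumes z: "z \<in> R" "z \<noteq> 0" and mp: "minimal_prime R (rspan R {z}) P" shows "t_prime R P"
  using minprime_t[OF mp principal_t[OF z]] .

lemma mp_pow: assumes z: "z \<in> R" "z \<noteq> 0" and mp: "minimal_prime R (rspan R {z}) P" and x: "x \<in> P"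
  shows "\<exists>k. dv P z (x ^ k)"
proof -
  obtain s k where s: "s \<in> R" "s \<notin> P" "s * x ^ k \<in> rspan R {z}"
    using minprime_pow[OF mp Z_facts(1)[OF z] x] by blast
  then obtain r where "r \<in> R" "s * x ^ k = r * z" unfolding span_single by blast
  then show ?thesis using s by (intro exI[of _ k] dvI[of s _ r]) auto
qed

lemma mp_unique: assumes M: "t_maximal R M" and mp: "minimal_prime R I P1" "minimal_prime R I P2"
  and sub: "P1 \<subseteq> M" "P2 \<subseteq> M" shows "P1 = P2"
proof -
  have p: "prime_ideal R P1" "prime_ideal R P2" "I \<subseteq> P1" "I \<subseteq> P2" using minimal_primeD mp by auto
  from primes_chain[OF M p(1,2) sub] show ?thesis
  proof
    assume "P1 \<subseteq> P2" then show ?thesis using minimal_primeD(3)[OF mp(2) p(1) p(3)] by simp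
  next
    assume "P2 \<subseteq> P1" then show ?thesis using minimal_primeD(3)[OF mp(1) p(2) p(4)] by simp
  qed
qed

lemma rp_mp: assumes M: "t_maximal R M" and z: "z \<in> M" "z \<noteq> 0"
  shows "minimal_prime R (rspan R {z}) (rp M z)"
proof (rule minimal_primeI)
  show P: "prime_ideal R (rp M z)" using rp_prime(1)[OF M z(1)] .
  show "rspan R {z} \<subseteq> rp M z" using Z_sub[OF primeD(1)[OF P] rp_prime(3)[OF M z(1)]] .
  fix Q assume Q: "prime_ideal R Q" "rspan R {z} \<subseteq> Q" "Q \<subseteq> rp M z"
  have "z \<in> Q" using Q(2) span_incl by blast
  then have "rp M z \<subseteq> Q" using rp_prime(4)[OF M z(1) Q(1)] Q(3) rp_prime(2)[OF M z(1)] by blast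
  then show "Q = rp M z" using Q(3) by blast
qed

lemma branched_gen: assumes Pg: "good P" and Q: "primary_ideal R Q" "rad R Q = P" and z: "z \<in> P" "z \<notin> Q"
  and y: "y \<in> P" shows "\<exists>k. dv P z (y ^ k)"
proof -
  have Pp: "prime_ideal R P" using good_prime[OF Pg] .
  have Qi: "rideal R Q" using Q unfolding primary_ideal_def by blast
  have zR: "z \<in> R" using prime_R[OF Pp z(1)] .
  have yR: "y \<in> R" using prime_R[OF Pp y] .
  have "y \<in> rad R Q" using y Q(2) by simp
  then obtain k where k: "y ^ k \<in> Q" by (rule radE)
  from val_good[OF Pg zR Rpow[OF yR]] have "dv P z (y ^ k)"
  proof
    assume "dv P (y ^ k) z"
    then obtain s r where sr: "s \<in> R" "s \<notin> P" "r \<in> R" "s * z = r * y ^ k" by (rule dvE)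
    have "r * y ^ k \<in> Q" using ideal_mul[OF Qi sr(3) k] .
    then have "z * s \<in> Q" using sr(4) by (simp add: mult.commute)
    then have "z \<in> Q \<or> s \<in> rad R Q" using Q(1) zR sr(1) unfolding primary_ideal_def by blast
    then show ?thesis using z(2) sr(2) Q(2) by blast
  qed
  then show ?thesis by blast
qed

lemma c4_c2: assumes c4: "\<forall>x\<in>R. x \<noteq> 0 \<longrightarrow> finite {P. minimal_prime R (rspan R {x}) P}"
  and P: "t_prime R P" "branched R P"
  shows "\<exists>J. rideal R J \<and> fin_gen R J \<and> J \<subseteq> P \<and> (\<forall>M. t_maximal R M \<and> \<not> P \<subseteq> M \<longrightarrow> \<not> J \<subseteq> M)"
proof -
  have Pp: "prime_ideal R P" "t_ideal R P" using P unfolding t_prime_def by auto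
  have Pg: "good P" using tprime_good[OF P(1)] .
  obtain Q where Q: "primary_ideal R Q" "rad R Q = P" "Q \<noteq> P" using P(2) unfolding branched_def by blast
  have Qi: "rideal R Q" using Q unfolding primary_ideal_def by blast
  have QP: "Q \<subseteq> P"
  proof
    fix q assume q: "q \<in> Q"
    have "q ^ 1 \<in> Q" using q by simp
    then have "q \<in> rad R Q" using radI ideal_in_R[OF Qi q] by blast
    then show "q \<in> P" using Q(2) by simp
  qed
  obtain z where z: "z \<in> P" "z \<notin> Q" using QP Q(3) by blast
  have zR: "z \<in> R" using prime_R[OF Pp(1) z(1)] .
  have z0: "z \<noteq> 0" using z ideal_0[OF Qi] by auto
  have dvz: "\<exists>k. dv P z (y ^ k)" if "y \<in> P" for y using branched_gen[OF Pg Q(1,2) z that] .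
  have Pmin: "minimal_prime R (rspan R {z}) P"
  proof (rule minimal_primeI)
    show "prime_ideal R P" using Pp(1) .
    show "rspan R {z} \<subseteq> P" using Z_sub[OF primeD(1)[OF Pp(1)] z(1)] .
    fix Q' assume Q': "prime_ideal R Q'" "rspan R {z} \<subseteq> Q'" "Q' \<subseteq> P"
    have zQ: "z \<in> Q'" using Q'(2) span_incl by blast
    have "P \<subseteq> Q'"
    proof
      fix y assume y: "y \<in> P"
      obtain k where "dv P z (y ^ k)" using dvz[OF y] by blast
      then obtain s r where sr: "s \<in> R" "s \<notin> P" "r \<in> R" "s * y ^ k = r * z" by (rule dvE)
      have "s * y ^ k \<in> Q'" using sr(4) ideal_mul[OF primeD(1)[OF Q'(1)] sr(3) zQ] by simp
      moreover have "s \<notin> Q'" using sr(2) Q'(3) by blast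
      ultimately have "y ^ k \<in> Q'" using primeD(3)[OF Q'(1) sr(1) Rpow[OF prime_R[OF Pp(1) y]]] by blast
      then show "y \<in> Q'" using prime_pow[OF Q'(1) prime_R[OF Pp(1) y]] by blast
    qed
    then show "Q' = P" using Q'(3) by blast
  qed
  define F where "F = {P'. minimal_prime R (rspan R {z}) P'}"
  have Ff: "finite F" unfolding F_def using c4 zR z0 by blast
  have notsub: "\<not> P' \<subseteq> P" if "P' \<in> F - {P}" for P'
  proof
    assume "P' \<subseteq> P"
    have mp': "minimal_prime R (rspan R {z}) P'" using that unfolding F_def by blast
    have "P' = P" using minimal_primeD(3)[OF Pmin minimal_primeD(1)[OF mp'] minimal_primeD(2)[OF mp'] \<open>P' \<subseteq> P\<close>] .
    then show False using that by blast
  qed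
  have ex: "\<forall>P'\<in>F - {P}. \<exists>s\<in>R. s \<notin> P \<and> s \<in> P'"
  proof
    fix P' assume P': "P' \<in> F - {P}"
    then obtain s where "s \<in> P'" "s \<notin> P" using notsub by blast
    moreover have "prime_ideal R P'" using P' unfolding F_def using minimal_primeD(1) by blast
    ultimately show "\<exists>s\<in>R. s \<notin> P \<and> s \<in> P'" using prime_R by blast
  qed
  have up: "t * s \<in> P'" if "s \<in> P'" "t \<in> R" "P' \<in> F - {P}" for s t P'
  proof -
    have "prime_ideal R P'" using that(3) unfolding F_def using minimal_primeD(1) by blast
    then show ?thesis using ideal_mul[OF primeD(1) that(2) that(1)] by blast
  qed
  have "\<exists>s\<in>R. s \<notin> P \<and> (\<forall>P'\<in>F - {P}. s \<in> P')"
  proof -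
    have ex': "\<forall>P'\<in>F - {P}. \<exists>s\<in>R. s \<notin> P \<and> (P' \<in> F - {P} \<longrightarrow> s \<in> P')" using ex by blast
    have up': "P' \<in> F - {P} \<longrightarrow> t * s \<in> P'" if "P' \<in> F - {P} \<longrightarrow> s \<in> P'" "t \<in> R" for s t P'
      using up that by blast
    obtain s where "s \<in> R" "s \<notin> P" "\<forall>P'\<in>F - {P}. P' \<in> F - {P} \<longrightarrow> s \<in> P'"
      using common_s[OF Pp(1), of "F - {P}", OF _ ex' up'] Ff by blast
    then show ?thesis by blast
  qed
  then obtain s where s: "s \<in> R" "s \<notin> P" "\<forall>P'\<in>F - {P}. s \<in> P'" by blast
  have exN: "\<forall>P'\<in>F - {P}. \<exists>N. \<forall>M'. t_maximal R M' \<and> P' \<subseteq> M' \<longrightarrow> dv M' z (s ^ N)"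
  proof
    fix P' assume P': "P' \<in> F - {P}"
    have mp': "minimal_prime R (rspan R {z}) P'" using P' unfolding F_def by blast
    obtain k where k: "dv P' z (s ^ k)" using mp_pow[OF zR z0 mp'] s(3) P' by blast
    have "\<forall>M'. t_maximal R M' \<and> P' \<subseteq> M' \<longrightarrow> dv M' z (s ^ Suc k)"
      using ue[OF minimal_primeD(1)[OF mp'] _ k] s(3) P' by blast
    then show "\<exists>N. \<forall>M'. t_maximal R M' \<and> P' \<subseteq> M' \<longrightarrow> dv M' z (s ^ N)" by blast
  qed
  have upN: "\<forall>M'. t_maximal R M' \<and> P' \<subseteq> M' \<longrightarrow> dv M' z (s ^ m)"
    if h1: "P' \<in> F - {P}" and h2: "\<forall>M'. t_maximal R M' \<and> P' \<subseteq> M' \<longrightarrow> dv M' z (s ^ n)" and h3: "n \<le> m" for P' n m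
  proof (intro allI impI)
    fix M' assume M': "t_maximal R M' \<and> P' \<subseteq> M'"
    have "dv M' z (s ^ (m - n) * s ^ n)" using dv_mul[OF Rpow[OF s(1)]] h2 M' by blast
    moreover have "s ^ (m - n) * s ^ n = s ^ m" using h3 by (simp add: power_add[symmetric])
    ultimately show "dv M' z (s ^ m)" by simp
  qed
  have "\<exists>N. \<forall>P'\<in>F - {P}. \<forall>M'. t_maximal R M' \<and> P' \<subseteq> M' \<longrightarrow> dv M' z (s ^ N)"
    apply (rule common_n2[where \<Phi> = "\<lambda>N P'. \<forall>M'. t_maximal R M' \<and> P' \<subseteq> M' \<longrightarrow> dv M' z (s ^ N)"])
      apply (simp add: Ff)
     apply (rule exN)
    apply (rule upN)
      apply assumption+
    done
  then obtain N where N: "\<forall>P'\<in>F - {P}. \<forall>M'. t_maximal R M' \<and> P' \<subseteq> M' \<longrightarrow> dv M' z (s ^ N)" by blast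
  define g where "g = s ^ N / z"
  have gn: "\<not> inloc P g"
  proof
    assume "inloc P g"
    then obtain v where v: "v \<in> R" "v \<notin> P" "v * g \<in> R" by (rule inlocE)
    have e: "v * s ^ N = (v * g) * z" unfolding g_def using z0 by simp
    have "(v * g) * z \<in> P" using ideal_mul[OF primeD(1)[OF Pp(1)] v(3) z(1)] .
    then have "v * s ^ N \<in> P" unfolding e .
    then have "s ^ N \<in> P" using primeD(3)[OF Pp(1) v(1) Rpow[OF s(1)]] v(2) by blast
    then show False using prime_pow[OF Pp(1) s(1)] s(2) by blast
  qed
  have out: "\<forall>M. t_maximal R M \<and> \<not> P \<subseteq> M \<longrightarrow> inloc M g"
  proof (intro allI impI)
    fix M assume M: "t_maximal R M \<and> \<not> P \<subseteq> M"
    show "inloc M g"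
    proof (cases "z \<in> M")
      case False
      have e: "z * g = s ^ N" unfolding g_def using z0 by simp
      have "z * g \<in> R" unfolding e using Rpow[OF s(1)] .
      then show ?thesis using zR False by (intro inlocI[of z]) auto
    next
      case True
      have mp': "minimal_prime R (rspan R {z}) (rp M z)" using rp_mp[OF conjunct1[OF M] True z0] .
      have sub: "rp M z \<subseteq> M" using rp_prime(2)[OF conjunct1[OF M] True] .
      have "rp M z \<noteq> P" using sub M by blast
      then have "rp M z \<in> F - {P}" using mp' unfolding F_def by blast
      then have "dv M z (s ^ N)" using N sub M by blast
      then obtain t r where tr: "t \<in> R" "t \<notin> M" "r \<in> R" "t * s ^ N = r * z" by (rule dvE)
      have e: "t * g = r" unfolding g_def using tr(4) z0 by (simp add: field_simps)
      have "t * g \<in> R" unfolding e using tr(3) .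
      then show ?thesis using inlocI[OF tr(1) tr(2)] by blast
    qed
  qed
  show ?thesis using G2J[OF Pp(1) gn out] .
qed

end

context pvmd begin

lemma span_fin: assumes "x \<in> rspan R S" shows "\<exists>F. finite F \<and> F \<subseteq> S \<and> x \<in> rspan R F"
proof -
  obtain F r where F: "finite F" "F \<subseteq> S" "\<forall>s\<in>F. r s \<in> R" "x = (\<Sum>s\<in>F. r s * s)"
    using assms unfolding rspan_def by blast
  have "x \<in> rspan R F" unfolding rspan_def using F by blast
  then show ?thesis using F by blast
qed

lemma c2_c4: assumes c2: C2 and z: "z \<in> R" "z \<noteq> 0"
  shows "finite {P. minimal_prime R (rspan R {z}) P}"
proof -
  define F where "F = {P. minimal_prime R (rspan R {z}) P}"
  have mpF: "minimal_prime R (rspan R {z}) P" if "P \<in> F" for P using that unfolding F_def by blast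
  have zP: "z \<in> P" if "P \<in> F" for P using minimal_primeD(2)[OF mpF[OF that]] span_incl by blast
  have primeF: "prime_ideal R P" if "P \<in> F" for P using minimal_primeD(1)[OF mpF[OF that]] .
  have exG: "\<forall>P\<in>F. \<exists>G. finite G \<and> G \<subseteq> P \<and> (\<forall>M. t_maximal R M \<and> \<not> P \<subseteq> M \<longrightarrow> \<not> G \<subseteq> M)"
  proof
    fix P assume P: "P \<in> F"
    have tP: "t_prime R P" using mp_t[OF z mpF[OF P]] .
    have "\<forall>x\<in>P. \<exists>k. dv P z (x ^ k)" using mp_pow[OF z mpF[OF P]] by blast
    then have bP: "branched R P" using branched_of[OF primeF[OF P] zP[OF P] z(2)] by blast
    obtain J where J: "rideal R J" "fin_gen R J" "J \<subseteq> P" "\<forall>M. t_maximal R M \<and> \<not> P \<subseteq> M \<longrightarrow> \<not> J \<subseteq> M"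
      using c2 tP bP unfolding C2_def by blast
    obtain G where G: "finite G" "J = rspan R G" using J fg_D by blast
    have GP: "G \<subseteq> P" using span_incl[of G] G(2) J(3) by simp
    have "\<forall>M. t_maximal R M \<and> \<not> P \<subseteq> M \<longrightarrow> \<not> G \<subseteq> M"
    proof (intro allI impI)
      fix M assume M: "t_maximal R M \<and> \<not> P \<subseteq> M"
      have "\<not> J \<subseteq> M" using J(4)[rule_format, OF M] .
      then show "\<not> G \<subseteq> M" using G(2) span_in_ideal[OF primeD(1)[OF tmax_prime[OF conjunct1[OF M]]]] by blast
    qed
    then show "\<exists>G. finite G \<and> G \<subseteq> P \<and> (\<forall>M. t_maximal R M \<and> \<not> P \<subseteq> M \<longrightarrow> \<not> G \<subseteq> M)" using G(1) GP by blast
  qed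
  then obtain Gf where Gf: "\<forall>P\<in>F. finite (Gf P) \<and> Gf P \<subseteq> P \<and> (\<forall>M. t_maximal R M \<and> \<not> P \<subseteq> M \<longrightarrow> \<not> Gf P \<subseteq> M)"
    by metis
  define E where "E P = {d \<in> R. \<forall>g\<in>Gf P. \<exists>e. \<exists>r\<in>R. d * g ^ e = r * z}" for P
  have ER: "E P \<subseteq> R" for P unfolding E_def by blast
  have Ea: "\<not> E P \<subseteq> M" if P: "P \<in> F" and M: "t_maximal R M" "P \<subseteq> M" for P M
  proof -
    have Mp: "prime_ideal R M" using tmax_prime[OF M(1)] .
    have ex: "\<forall>g\<in>Gf P. \<exists>d\<in>R. d \<notin> M \<and> (\<exists>e. \<exists>r\<in>R. d * g ^ e = r * z)"
    proof
      fix g assume g: "g \<in> Gf P"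
      have gP: "g \<in> P" using Gf P g by blast
      obtain k where k: "dv P z (g ^ k)" using mp_pow[OF z mpF[OF P] gP] by blast
      have "dv M z (g ^ Suc k)" using ue[OF primeF[OF P] gP k M] .
      then obtain d r where "d \<in> R" "d \<notin> M" "r \<in> R" "d * g ^ Suc k = r * z" by (rule dvE)
      then show "\<exists>d\<in>R. d \<notin> M \<and> (\<exists>e. \<exists>r\<in>R. d * g ^ e = r * z)" by blast
    qed
    have up: "\<exists>e. \<exists>r\<in>R. (t * d) * g ^ e = r * z" if h1: "\<exists>e. \<exists>r\<in>R. d * g ^ e = r * z" and h2: "t \<in> R" for d t g
    proof -
      obtain e r where er: "r \<in> R" "d * g ^ e = r * z" using h1 by blast
      have "(t * d) * g ^ e = (t * r) * z" using er(2) by (simp add: ac_simps)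
      then show ?thesis using er(1) h2 by blast
    qed
    have fG: "finite (Gf P)" using Gf P by blast
    obtain d where d: "d \<in> R" "d \<notin> M" "\<forall>g\<in>Gf P. \<exists>e. \<exists>r\<in>R. d * g ^ e = r * z"
      using common_s[OF Mp fG ex up] by blast
    then have "d \<in> E P" unfolding E_def by blast
    then show ?thesis using d(2) by blast
  qed
  have Eb: "E P \<subseteq> M" if P: "P \<in> F" and M: "t_maximal R M" "z \<in> M" "\<not> P \<subseteq> M" for P M
  proof
    fix d assume d: "d \<in> E P"
    have Mp: "prime_ideal R M" using tmax_prime[OF M(1)] .
    have "\<not> Gf P \<subseteq> M" using Gf P M by blast
    then obtain g where g: "g \<in> Gf P" "g \<notin> M" by blast
    have gR: "g \<in> R" using g(1) Gf P prime_R[OF primeF[OF P]] by blast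
    obtain e r where er: "r \<in> R" "d * g ^ e = r * z" using d g(1) unfolding E_def by blast
    have "d * g ^ e \<in> M" unfolding er(2) using ideal_mul[OF primeD(1)[OF Mp] er(1) M(2)] .
    moreover have "g ^ e \<notin> M" using prime_powN[OF Mp gR g(2)] .
    moreover have "d \<in> R" using d ER by blast
    ultimately show "d \<in> M" using primeD(3)[OF Mp _ Rpow[OF gR]] by blast
  qed
  define S where "S = {z} \<union> \<Union>(E ` F)"
  have SR: "S \<subseteq> R" unfolding S_def using ER z(1) by blast
  define Gz where "Gz = rspan R S"
  have Gzi: "rideal R Gz" unfolding Gz_def using span_ideal[OF SR] .
  have zGz: "z \<in> Gz" unfolding Gz_def S_def using span_incl by blast
  have Gzn: "Gz \<noteq> {0}" using zGz z(2) by blast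
  have "\<forall>M. t_maximal R M \<longrightarrow> \<not> Gz \<subseteq> M"
  proof (intro allI impI)
    fix M assume M: "t_maximal R M"
    show "\<not> Gz \<subseteq> M"
    proof (cases "z \<in> M")
      case False then show ?thesis using zGz by blast
    next
      case True
      have rF: "rp M z \<in> F" unfolding F_def using rp_mp[OF M True z(2)] by blast
      have rM: "rp M z \<subseteq> M" using rp_prime(2)[OF M True] .
      have n: "\<not> E (rp M z) \<subseteq> M" using Ea[OF rF M rM] .
      have "E (rp M z) \<subseteq> S" unfolding S_def using rF by blast
      then have "E (rp M z) \<subseteq> Gz" unfolding Gz_def using span_incl[of S] by (rule subset_trans)
      then show ?thesis using n by blast
    qed
  qed
  then have "1 \<in> top_t R Gz" using one_top[OF Gzi Gzn] by blast
  then obtain H where H: "H \<subseteq> Gz" "H \<noteq> {0}" "fin_gen R H" "1 \<in> vop R H" unfolding mem_top_t by blast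
  obtain G0 where G0: "finite G0" "H = rspan R G0" using H fg_D by blast
  have G0Gz: "G0 \<subseteq> Gz" using span_incl[of G0] G0(2) H(1) by simp
  have "\<forall>h\<in>G0. \<exists>Fh. finite Fh \<and> Fh \<subseteq> S \<and> h \<in> rspan R Fh" using G0Gz span_fin unfolding Gz_def by blast
  then obtain Fh where Fh: "\<forall>h\<in>G0. finite (Fh h) \<and> Fh h \<subseteq> S \<and> h \<in> rspan R (Fh h)" by metis
  define U where "U = \<Union>(Fh ` G0)"
  have Uf: "finite U" unfolding U_def using Fh G0(1) by blast
  have US: "U \<subseteq> S" unfolding U_def using Fh by blast
  have G0U: "G0 \<subseteq> rspan R U"
  proof
    fix h assume h: "h \<in> G0"
    have "Fh h \<subseteq> U" unfolding U_def using h by blast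
    then show "h \<in> rspan R U" using span_mono Fh h by blast
  qed
  have "\<forall>u\<in>U - {z}. \<exists>P\<in>F. u \<in> E P" using US unfolding S_def by blast
  then obtain Pu where Pu: "\<forall>u\<in>U - {z}. Pu u \<in> F \<and> u \<in> E (Pu u)" by metis
  define F0 where "F0 = Pu ` (U - {z})"
  have F0f: "finite F0" unfolding F0_def using Uf by blast
  have "F \<subseteq> F0"
  proof
    fix P assume P: "P \<in> F"
    show "P \<in> F0"
    proof (rule ccontr)
      assume nP: "P \<notin> F0"
      have tP: "t_prime R P" using mp_t[OF z mpF[OF P]] .
      obtain M where M: "t_maximal R M" "P \<subseteq> M"
        using exists_tmax[OF conjunct2[OF tP[unfolded t_prime_def]] primeD(2)[OF primeF[OF P]]] by blast
      have zM: "z \<in> M" using zP[OF P] M(2) by blast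
      have "U \<subseteq> M"
      proof
        fix u assume u: "u \<in> U"
        show "u \<in> M"
        proof (cases "u = z")
          case True then show ?thesis using zM by simp
        next
          case False
          then have uu: "Pu u \<in> F" "u \<in> E (Pu u)" using Pu u by auto
          have "Pu u \<in> F0" unfolding F0_def using u False by blast
          have "\<not> Pu u \<subseteq> M"
          proof
            assume "Pu u \<subseteq> M"
            then have "Pu u = P" using mp_unique[OF M(1) mpF[OF uu(1)] mpF[OF P] _ M(2)] by blast
            then show False using nP \<open>Pu u \<in> F0\<close> by simp
          qed
          then have "E (Pu u) \<subseteq> M" using Eb[OF uu(1) M(1) zM] by blast
          then show ?thesis using uu(2) by blast
        qed
      qed
      have Mp: "prime_ideal R M" using tmax_prime[OF M(1)] .
      have "rspan R U \<subseteq> M" using span_in_ideal[OF primeD(1)[OF Mp] \<open>U \<subseteq> M\<close>] .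
      then have "G0 \<subseteq> M" using G0U by blast
      then have "H \<subseteq> M" using G0(2) span_in_ideal[OF primeD(1)[OF Mp]] by simp
      then have "vop R H \<subseteq> M" using t_ideal_vop[OF _ _ H(2) H(3)] M(1) unfolding t_maximal_def by blast
      then show False using H(4) prime_1[OF Mp] by blast
    qed
  qed
  then show ?thesis using F0f finite_subset unfolding F_def by blast
qed

lemma c4_c5: assumes c4: "\<forall>x\<in>R. x \<noteq> 0 \<longrightarrow> finite {P. minimal_prime R (rspan R {x}) P}"
  and J: "rideal R J" "fin_gen R J" "J \<noteq> {0}"
  shows "finite {P. minimal_t_prime R J P}"
proof -
  obtain G where G: "finite G" "J = rspan R G" using J fg_D by blast
  have GJ: "G \<subseteq> J" using span_incl[of G] G(2) by simp
  have GR: "G \<subseteq> R" using GJ ideal_R[OF J(1)] by blast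
  have Gne: "G \<noteq> {}" using J(3) G(2) span_empty by auto
  have "{P. minimal_t_prime R J P} \<subseteq> (\<Union>g\<in>G - {0}. {P. minimal_prime R (rspan R {g}) P})"
  proof
    fix P assume "P \<in> {P. minimal_t_prime R J P}"
    then have mtp: "t_prime R P" "J \<subseteq> P" "\<And>Q. t_prime R Q \<Longrightarrow> J \<subseteq> Q \<Longrightarrow> Q \<subseteq> P \<Longrightarrow> Q = P"
      unfolding minimal_t_prime_def by auto
    have Pp: "prime_ideal R P" "t_ideal R P" using mtp(1) unfolding t_prime_def by auto
    obtain M where M: "t_maximal R M" "P \<subseteq> M" using exists_tmax[OF Pp(2) primeD(2)[OF Pp(1)]] by blast
    have Mp: "prime_ideal R M" using tmax_prime[OF M(1)] .
    obtain g where g: "g \<in> G" "\<forall>h\<in>G. dv M g h" using val_min[OF tmax_good[OF M(1)] G(1) Gne GR] by blast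
    have g0: "g \<noteq> 0"
    proof
      assume "g = 0"
      have "h = 0" if hG: "h \<in> G" for h
      proof -
        have "dv M g h" using g(2) hG by blast
        then obtain s r where sr: "s \<in> R" "s \<notin> M" "r \<in> R" "s * h = r * g" by (rule dvE)
        have "s \<noteq> 0" using sr prime_0[OF Mp] by auto
        then show ?thesis using sr(4) \<open>g = 0\<close> by simp
      qed
      then show False using span_nz[of G] J(3) G(2) by blast
    qed
    have gR: "g \<in> R" using g(1) GR by blast
    have "minimal_prime R (rspan R {g}) P"
    proof (rule minimal_primeI)
      show "prime_ideal R P" using Pp(1) .
      show "rspan R {g} \<subseteq> P" using Z_sub[OF primeD(1)[OF Pp(1)]] GJ g(1) mtp(2) by blast
      fix Q assume Q: "prime_ideal R Q" "rspan R {g} \<subseteq> Q" "Q \<subseteq> P"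
      have gQ: "g \<in> Q" using Q(2) span_incl by blast
      have QM: "Q \<subseteq> M" using Q(3) M(2) by blast
      have tQ: "t_prime R Q" using prime_t(2)[OF Q(1) _ M(1) QM] gQ g0 by blast
      have "G \<subseteq> Q"
      proof
        fix h assume h: "h \<in> G"
        have "dv M g h" using g(2) h by blast
        then obtain s r where sr: "s \<in> R" "s \<notin> M" "r \<in> R" "s * h = r * g" by (rule dvE)
        have "s * h \<in> Q" unfolding sr(4) using ideal_mul[OF primeD(1)[OF Q(1)] sr(3) gQ] .
        moreover have "s \<notin> Q" using sr(2) QM by blast
        moreover have "h \<in> R" using h GR by blast
        ultimately show "h \<in> Q" using primeD(3)[OF Q(1) sr(1)] by blast
      qed
      then have "J \<subseteq> Q" using G(2) span_in_ideal[OF primeD(1)[OF Q(1)]] by simp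
      then show "Q = P" using mtp(3)[OF tQ _ Q(3)] by blast
    qed
    then show "P \<in> (\<Union>g\<in>G - {0}. {P. minimal_prime R (rspan R {g}) P})" using g(1) g0 by blast
  qed
  moreover have "finite (\<Union>g\<in>G - {0}. {P. minimal_prime R (rspan R {g}) P})"
    using G(1) c4 GR by blast
  ultimately show ?thesis using finite_subset by blast
qed

lemma c5_c4: assumes c5: "\<forall>J. rideal R J \<and> fin_gen R J \<and> J \<noteq> {0} \<longrightarrow> finite {P. minimal_t_prime R J P}"
  and z: "z \<in> R" "z \<noteq> 0" shows "finite {P. minimal_prime R (rspan R {z}) P}"
proof -
  have "{P. minimal_prime R (rspan R {z}) P} \<subseteq> {P. minimal_t_prime R (rspan R {z}) P}"
  proof
    fix P assume "P \<in> {P. minimal_prime R (rspan R {z}) P}"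
    then have mp: "minimal_prime R (rspan R {z}) P" by blast
    have "t_prime R P" using mp_t[OF z mp] .
    moreover have "rspan R {z} \<subseteq> P" using minimal_primeD(2)[OF mp] .
    moreover have "\<forall>Q. t_prime R Q \<and> rspan R {z} \<subseteq> Q \<and> Q \<subseteq> P \<longrightarrow> Q = P"
      using minimal_primeD(3)[OF mp] unfolding t_prime_def by blast
    ultimately show "P \<in> {P. minimal_t_prime R (rspan R {z}) P}" unfolding minimal_t_prime_def by blast
  qed
  moreover have "finite {P. minimal_t_prime R (rspan R {z}) P}" using c5 Z_facts[OF z] by blast
  ultimately show ?thesis using finite_subset by blast
qed

lemma top_t_fg: assumes J: "rideal R J" "fin_gen R J" "J \<noteq> {0}" shows "top_t R J = vop R J"
proof
  show "top_t R J \<subseteq> vop R J" unfolding top_t_def using vop_mono by blast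
  show "vop R J \<subseteq> top_t R J"
  proof
    fix y assume "y \<in> vop R J"
    then show "y \<in> top_t R J" unfolding mem_top_t using J by blast
  qed
qed

lemma c5_c6: assumes c5: "\<forall>J. rideal R J \<and> fin_gen R J \<and> J \<noteq> {0} \<longrightarrow> finite {P. minimal_t_prime R J P}"
  and J: "rideal R J" "fin_gen R J" "J \<noteq> {0}" shows "finite {P. minimal_prime R (vop R J) P}"
proof -
  have Vt: "t_ideal R (vop R J)" using t_ideal_top[OF J(1) J(3)] top_t_fg[OF J] by simp
  have "{P. minimal_prime R (vop R J) P} \<subseteq> {P. minimal_t_prime R J P}"
  proof
    fix P assume "P \<in> {P. minimal_prime R (vop R J) P}"
    then have mp: "minimal_prime R (vop R J) P" by blast
    have tP: "t_prime R P" using minprime_t[OF mp Vt] .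
    have JP: "J \<subseteq> P" using vop_incl minimal_primeD(2)[OF mp] by blast
    have "\<forall>Q. t_prime R Q \<and> J \<subseteq> Q \<and> Q \<subseteq> P \<longrightarrow> Q = P"
    proof (intro allI impI)
      fix Q assume Q: "t_prime R Q \<and> J \<subseteq> Q \<and> Q \<subseteq> P"
      have Qt: "t_ideal R Q" "prime_ideal R Q" using Q unfolding t_prime_def by auto
      have "vop R J \<subseteq> Q" using t_ideal_vop[OF Qt(1) _ J(3) J(2)] Q by blast
      then show "Q = P" using minimal_primeD(3)[OF mp Qt(2)] Q by blast
    qed
    then show "P \<in> {P. minimal_t_prime R J P}" unfolding minimal_t_prime_def using tP JP by blast
  qed
  moreover have "finite {P. minimal_t_prime R J P}" using c5 J by blast
  ultimately show ?thesis using finite_subset by blast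
qed

lemma c6_c4: assumes c6: "\<forall>J. rideal R J \<and> fin_gen R J \<and> J \<noteq> {0} \<longrightarrow> finite {P. minimal_prime R (vop R J) P}"
  and z: "z \<in> R" "z \<noteq> 0" shows "finite {P. minimal_prime R (rspan R {z}) P}"
  using c6 Z_facts[OF z] vop_principal[OF z] by metis

end

theorem theorem1p8:
  fixes R :: "'k::field set"
  assumes "is_subring R" and "has_quotient_field R" and "R \<noteq> UNIV" and "PvMD R"
  defines "c1 \<equiv> tRTP R"
      and "c2 \<equiv> (\<forall>P. t_prime R P \<and> branched R P \<longrightarrow>
               (\<exists>J. rideal R J \<and> fin_gen R J \<and> J \<subseteq> P \<and>
                    (\<forall>M. t_maximal R M \<and> \<not> P \<subseteq> M \<longrightarrow> \<not> J \<subseteq> M)))"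
      and "c3 \<equiv> (\<forall>P. t_prime R P \<and> branched R P \<longrightarrow>
               (\<exists>J. rideal R J \<and> fin_gen R J \<and> J \<noteq> {0} \<and> P = rad R (vop R J)))"
      and "c4 \<equiv> (\<forall>x\<in>R. x \<noteq> 0 \<longrightarrow> finite {P. minimal_prime R (rspan R {x}) P})"
      and "c5 \<equiv> (\<forall>J. rideal R J \<and> fin_gen R J \<and> J \<noteq> {0} \<longrightarrow>
               finite {P. minimal_t_prime R J P})"
      and "c6 \<equiv> (\<forall>J. rideal R J \<and> fin_gen R J \<and> J \<noteq> {0} \<longrightarrow>
               finite {P. minimal_prime R (vop R J) P})"
  shows "(c1 \<longleftrightarrow> c2) \<and> (c1 \<longleftrightarrow> c3) \<and> (c1 \<longleftrightarrow> c4) \<and> (c1 \<longleftrightarrow> c5) \<and> (c1 \<longleftrightarrow> c6)"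
proof -
  interpret pvmd R
    using assms(1-4) by (unfold_locales) auto
  have e2: "c2 = C2" unfolding c2_def C2_def ..
  have "c1 \<Longrightarrow> c2" unfolding c1_def c2_def using c1_c2 by blast
  moreover have "c2 \<Longrightarrow> c1" unfolding c1_def e2 using c2_c1 by blast
  moreover have "c2 \<Longrightarrow> c3" unfolding c2_def c3_def using c2_c3 by blast
  moreover have "c3 \<Longrightarrow> c2"
  proof -
    assume c3: c3
    show c2 unfolding c2_def
    proof (intro allI impI)
      fix P assume P: "t_prime R P \<and> branched R P"
      then obtain J where J: "rideal R J" "fin_gen R J" "J \<noteq> {0}" "P = rad R (vop R J)"
        using c3 unfolding c3_def by blast
      show "\<exists>J. rideal R J \<and> fin_gen R J \<and> J \<subseteq> P \<and> (\<forall>M. t_maximal R M \<and> \<not> P \<subseteq> M \<longrightarrow> \<not> J \<subseteq> M)"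
        using c3_c2[OF conjunct1[OF P] J] J(1,2) by blast
    qed
  qed
  moreover have "c2 \<Longrightarrow> c4" unfolding c4_def e2 using c2_c4 by blast
  moreover have "c4 \<Longrightarrow> c2" unfolding c4_def c2_def using c4_c2 by blast
  moreover have "c4 \<Longrightarrow> c5" unfolding c4_def c5_def using c4_c5 by blast
  moreover have "c5 \<Longrightarrow> c4" unfolding c4_def c5_def using c5_c4 by blast
  moreover have "c5 \<Longrightarrow> c6" unfolding c6_def c5_def using c5_c6 by blast
  moreover have "c6 \<Longrightarrow> c4" unfolding c4_def c6_def using c6_c4 by blast
  ultimately show ?thesis by blast
qed


end
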